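(* Let $\gamma\in(0,1)$ and $\mu\in(0,\infty)\setminus\{1\}$, with $k=\lfloor1/\mu\rfloor$, $K=\lfloor 2/\mu\rfloor$ and $\gamma_c(\mu)=\frac{k}{k+1}\left(1-\frac{\mu}{2-k\mu}\right)$. Then there exists a concave traveling wave $g$ with compact nonempty support for the dynamics in the context. It is unique up to translation among such waves. Normalize it by translation so that $\sup\{x:g(x)>0\}=0$, and write its support as $[L,0]$ with $L<0$. Then: - $g$ is differentiable on $[L,0]$ except at finitely many points; - $g(x)=-\int_x^0 g'(y)\,dy$ for $x\in[L,0]$; - $g(x)=-\infty$ for $x\notin[L,0]$. Let $v$ be the speed of $g$, and let $s=\sup\{\xi\in\mathbb{R}:\sup_{x}\Phi_\xi[g](x)\ge\gamma\}$. (i) If $\gamma\le\gamma_c(\mu)$ (which forces $\mu<1$), then $v=\frac{2\gamma}{k(2-(k+1)\mu)}$ and $v\le s$. Moreover, for every integer $j\ge1$ and every $x\in[L,0]$ with $-jv<x<-(j-1)v$, one has $g'(x)=j\mu-1$. (ii) If $\gamma>\gamma_c(\mu)$, then $v=1-\gamma$ and $$v-s=1-(1-\gamma)\Big(k\big(1-\tfrac{k+1}{2}\mu\big)+1\Big)>0.$$ Moreover, for $x\in[L,0]$ (away from finitely many points): - $g'(x)=-1$ if $x>s-v$; - $g'(x)=j\mu-1$ if $s-(j+1)v<x<s-jv$ for some integer $1\le j\le K+1$; - $g'(x)=1+\mu$ if $x<s-(K+2)v$. In particular, $\gamma\mapsto v$ changes monotonicity at $\gamma_c(\mu)$ and is maximized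 there.
   Context: Let $\pi:\mathbb{R}\cup\{-\infty\}\to\mathbb{R}\cup\{-\infty\}$ be defined by $\pi(x)=x$ if $x\ge0$ and $\pi(x)=-\infty$ otherwise. Write $x_+=\max(x,0)$, and use the convention $\sup\emptyset=-\infty$. For $h:\mathbb{R}\to\mathbb{R}\cup\{-\infty\}$ and $\xi\in\mathbb{R}$, define $$\Phi_\xi[h](x)=1-\gamma-\mu(\xi-x)_++\sup_{y\in\mathbb{R}}\big(h(y)-|x-y|\big).$$ Given $g_0:\mathbb{R}\to\mathbb{R}\cup\{-\infty\}$, define recursively for $n\ge1$: - $p_n(x)=\pi\big[1-\gamma+\sup_{y}\big(g_{n-1}(y)-\min(1,\mu)(x-y)_+\big)\big]$; - $s_n=\sup\{x: p_n(x)\ge\gamma\}$; - $g_n=\pi\circ\Phi_{s_n}[g_{n-1}]$. A function $g$ is a traveling wave with speed $v$ if, when $g_0=g$, one has $g_n(x)=g(x-nv)$ for all $n\ge0$ and all $x$. The support of $g$ is $\{x:g(x)\ge0\}$. *)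

theory Defs
  imports "HOL-Analysis.Analysis" "HOL-Library.Extended_Real"
begin

definition piop :: "ereal \<Rightarrow> ereal" where
  "piop x = (if x \<ge> 0 then x else -\<infinity>)"

text \<open>\<Phi>_\<xi>[h](x) = 1 - \<gamma> - \<mu> (\<xi>-x)_+ + sup_y (h y - |x-y|); \<xi> may be \<plusminus>\<infinity>
  since s_n is a supremum with sup of the empty set = -\<infinity>.\<close>
definition Phi :: "real \<Rightarrow> real \<Rightarrow> ereal \<Rightarrow> (real \<Rightarrow> ereal) \<Rightarrow> real \<Rightarrow> ereal" where
  "Phi \<gamma> \<mu> \<xi> h x =
     ereal (1 - \<gamma>) - ereal \<mu> * max (\<xi> - ereal x) 0 + (SUP y. h y - ereal \<bar>x - y\<bar>)"

definition pfun :: "real \<Rightarrow> real \<Rightarrow> (real \<Rightarrow> ereal) \<Rightarrow> real \<Rightarrow> ereal" where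
  "pfun \<gamma> \<mu> h x =
     piop (ereal (1 - \<gamma>) + (SUP y. h y - ereal (min 1 \<mu> * max (x - y) 0)))"

definition sfun :: "real \<Rightarrow> real \<Rightarrow> (real \<Rightarrow> ereal) \<Rightarrow> ereal" where
  "sfun \<gamma> \<mu> h = Sup (ereal ` {x. pfun \<gamma> \<mu> h x \<ge> ereal \<gamma>})"

definition step :: "real \<Rightarrow> real \<Rightarrow> (real \<Rightarrow> ereal) \<Rightarrow> (real \<Rightarrow> ereal)" where
  "step \<gamma> \<mu> h = (\<lambda>x. piop (Phi \<gamma> \<mu> (sfun \<gamma> \<mu> h) h x))"

fun gseq :: "real \<Rightarrow> real \<Rightarrow> (real \<Rightarrow> ereal) \<Rightarrow> nat \<Rightarrow> (real \<Rightarrow> ereal)" where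
  "gseq \<gamma> \<mu> g0 0 = g0"
| "gseq \<gamma> \<mu> g0 (Suc n) = step \<gamma> \<mu> (gseq \<gamma> \<mu> g0 n)"

definition traveling_wave :: "real \<Rightarrow> real \<Rightarrow> (real \<Rightarrow> ereal) \<Rightarrow> real \<Rightarrow> bool" where
  "traveling_wave \<gamma> \<mu> g v \<longleftrightarrow> (\<forall>n x. gseq \<gamma> \<mu> g n x = g (x - real n * v))"

definition support :: "(real \<Rightarrow> ereal) \<Rightarrow> real set" where
  "support g = {x. g x \<ge> 0}"

definition concave_ext :: "(real \<Rightarrow> ereal) \<Rightarrow> bool" where
  "concave_ext g \<longleftrightarrow>
     (\<forall>x y t. 0 < t \<and> t < 1 \<longrightarrow> ereal t * g x + ereal (1 - t) * g y \<le> g (t * x + (1 - t) * y))"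

definition admissible_wave :: "(real \<Rightarrow> ereal) \<Rightarrow> bool" where
  "admissible_wave g \<longleftrightarrow> (\<forall>x. g x \<noteq> \<infinity>) \<and> concave_ext g \<and>
     compact (support g) \<and> support g \<noteq> {}"

definition kk :: "real \<Rightarrow> real" where "kk \<mu> = real_of_int \<lfloor>1 / \<mu>\<rfloor>"
definition KK :: "real \<Rightarrow> real" where "KK \<mu> = real_of_int \<lfloor>2 / \<mu>\<rfloor>"
definition gamma_c :: "real \<Rightarrow> real" where
  "gamma_c \<mu> = kk \<mu> / (kk \<mu> + 1) * (1 - \<mu> / (2 - kk \<mu> * \<mu>))"

definition speed_formula :: "real \<Rightarrow> real \<Rightarrow> real" where
  "speed_formula \<mu> \<gamma> = (if \<gamma> \<le> gamma_c \<mu> then 2 * \<gamma> / (kk \<mu> * (2 - (kk \<mu> + 1) * \<mu>)) else 1 - \<gamma>)"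

end

theory Submission
  imports Defs
begin

definition shift :: "real \<Rightarrow> (real \<Rightarrow> ereal) \<Rightarrow> real \<Rightarrow> ereal" where
  "shift c g = (\<lambda>x. g (x - c))"
definition Dg :: "(real \<Rightarrow> ereal) \<Rightarrow> real \<Rightarrow> ereal" where
  "Dg g z = (SUP y. g y - ereal \<bar>z - y\<bar>)"
definition Pc :: "real \<Rightarrow> (real \<Rightarrow> ereal) \<Rightarrow> real \<Rightarrow> ereal" where
  "Pc c g x = (SUP y. g y - ereal (c * max (x - y) 0))"

lemma SUP_shift_real: "(SUP y::real. f (y - c)) = (SUP y. f y :: 'a::complete_lattice)"
proof -
  have "range (\<lambda>y. f (y - c)) = range f"
  proof (intro set_eqI iffI)
    fix z assume "z \<in> range (\<lambda>y. f (y - c))"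
    then obtain y where "z = f (y - c)" by blast
    then show "z \<in> range f" by blast
  next
    fix z assume "z \<in> range f"
    then obtain y where "z = f y" by blast
    then have "z = f ((y + c) - c)" by simp
    then show "z \<in> range (\<lambda>y. f (y - c))" by blast
  qed
  then show ?thesis by simp
qed

lemma Phi_eq: "Phi \<gamma> \<mu> \<xi> h x = ereal (1-\<gamma>) - ereal \<mu> * max (\<xi> - ereal x) 0 + Dg h x"
  by (simp add: Phi_def Dg_def)

lemma pfun_eq: "pfun \<gamma> \<mu> h x = piop (ereal (1-\<gamma>) + Pc (min 1 \<mu>) h x)"
  by (simp add: pfun_def Pc_def)

lemma Dg_shift: "Dg (shift c g) z = Dg g (z - c)"
proof -
  have "Dg (shift c g) z = (SUP y. (\<lambda>w. g w - ereal \<bar>z - c - w\<bar>) (y - c))"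
    unfolding Dg_def shift_def by (simp add: algebra_simps)
  also have "\<dots> = Dg g (z - c)" unfolding Dg_def by (rule SUP_shift_real)
  finally show ?thesis .
qed

lemma Pc_shift: "Pc a (shift c g) x = Pc a g (x - c)"
proof -
  have "Pc a (shift c g) x = (SUP y. (\<lambda>w. g w - ereal (a * max (x - c - w) 0)) (y - c))"
    unfolding Pc_def shift_def by (simp add: algebra_simps)
  also have "\<dots> = Pc a g (x - c)" unfolding Pc_def by (rule SUP_shift_real)
  finally show ?thesis .
qed

lemma pfun_shift: "pfun \<gamma> \<mu> (shift c g) x = pfun \<gamma> \<mu> g (x - c)"
  by (simp add: pfun_eq Pc_shift)

lemma sfun_shift: "sfun \<gamma> \<mu> (shift c g) = sfun \<gamma> \<mu> g + ereal c"
proof -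
  define A where "A = {x. pfun \<gamma> \<mu> g x \<ge> ereal \<gamma>}"
  have setq: "{x. pfun \<gamma> \<mu> (shift c g) x \<ge> ereal \<gamma>} = (\<lambda>x. x + c) ` A"
    unfolding A_def pfun_shift
  proof (intro set_eqI iffI)
    fix x assume "x \<in> {x. ereal \<gamma> \<le> pfun \<gamma> \<mu> g (x - c)}"
    then have "x - c \<in> {x. ereal \<gamma> \<le> pfun \<gamma> \<mu> g x}" by simp
    moreover have "x = (x - c) + c" by simp
    ultimately show "x \<in> (\<lambda>x. x + c) ` {x. ereal \<gamma> \<le> pfun \<gamma> \<mu> g x}" by blast
  qed auto
  have "ereal ` ((\<lambda>x. x + c) ` A) = (\<lambda>e. e + ereal c) ` (ereal ` A)"
    by (auto simp: image_image)
  then have "sfun \<gamma> \<mu> (shift c g) = (SUP e\<in>ereal ` A. e + ereal c)"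
    unfolding sfun_def setq by simp
  also have "\<dots> = Sup (ereal ` A) + ereal c"
  proof (cases "A = {}")
    case True then show ?thesis by (simp add: bot_ereal_def)
  next
    case False then show ?thesis
      by (subst SUP_ereal_add_left) auto
  qed
  finally show ?thesis unfolding sfun_def A_def .
qed

lemma Phi_shift: "Phi \<gamma> \<mu> (\<xi> + ereal c) (shift c g) x = Phi \<gamma> \<mu> \<xi> g (x - c)"
proof -
  have "\<xi> + ereal c - ereal x = \<xi> - ereal (x - c)"
    by (cases \<xi>) auto
  then show ?thesis by (simp add: Phi_eq Dg_shift)
qed

lemma step_shift: "step \<gamma> \<mu> (shift c g) = shift c (step \<gamma> \<mu> g)"
proof (rule ext)
  fix x
  show "step \<gamma> \<mu> (shift c g) x = shift c (step \<gamma> \<mu> g) x"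
    unfolding step_def sfun_shift Phi_shift by (simp add: shift_def)
qed

lemma shift_shift: "shift a (shift b g) = shift (a + b) g"
  by (simp add: shift_def algebra_simps)

lemma shift_0: "shift 0 g = g" by (simp add: shift_def)

lemma gseq_shift: "gseq \<gamma> \<mu> (shift c g) n = shift c (gseq \<gamma> \<mu> g n)"
  by (induction n) (simp_all add: step_shift)

lemma tw_of_step:
  assumes "step \<gamma> \<mu> g = shift v g"
  shows "traveling_wave \<gamma> \<mu> g v"
proof -
  have "gseq \<gamma> \<mu> g n = shift (real n * v) g" for n
  proof (induction n)
    case 0 then show ?case by (simp add: shift_0)
  next
    case (Suc n)
    have "gseq \<gamma> \<mu> g (Suc n) = step \<gamma> \<mu> (shift (real n * v) g)" using Suc by simp
    also have "\<dots> = shift (real n * v) (shift v g)" by (simp add: step_shift assms)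
    also have "\<dots> = shift (real (Suc n) * v) g" by (simp add: shift_shift algebra_simps)
    finally show ?case .
  qed
  then show ?thesis unfolding traveling_wave_def shift_def by simp
qed

lemma tw_step:
  assumes "traveling_wave \<gamma> \<mu> g v"
  shows "step \<gamma> \<mu> g = shift v g"
  using assms[unfolded traveling_wave_def, rule_format, of 1] by (auto simp: shift_def)

lemma tw_shift:
  assumes "traveling_wave \<gamma> \<mu> g v"
  shows "traveling_wave \<gamma> \<mu> (shift c g) v"
proof (rule tw_of_step)
  have "step \<gamma> \<mu> (shift c g) = shift c (shift v g)"
    by (simp add: step_shift tw_step[OF assms])
  then show "step \<gamma> \<mu> (shift c g) = shift v (shift c g)"
    by (simp add: shift_shift add.commute)
qed

lemma support_shift: "support (shift c g) = (\<lambda>x. x + c) ` support g"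
proof (intro set_eqI iffI)
  fix x assume "x \<in> support (shift c g)"
  then have "x - c \<in> support g" by (simp add: support_def shift_def)
  moreover have "x = (x - c) + c" by simp
  ultimately show "x \<in> (\<lambda>x. x + c) ` support g" by blast
qed (auto simp: support_def shift_def)

lemma concave_shift:
  assumes "concave_ext g" shows "concave_ext (shift c g)"
  unfolding concave_ext_def shift_def
proof (intro allI impI)
  fix x y t :: real assume t: "0 < t \<and> t < 1"
  have "ereal t * g (x - c) + ereal (1 - t) * g (y - c) \<le> g (t * (x - c) + (1 - t) * (y - c))"
    using assms t unfolding concave_ext_def by blast
  also have "t * (x - c) + (1 - t) * (y - c) = t * x + (1 - t) * y - c" by algebra
  finally show "ereal t * g (x - c) + ereal (1 - t) * g (y - c) \<le> g (t * x + (1 - t) * y - c)" .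
qed

lemma admissible_shift:
  assumes "admissible_wave g" shows "admissible_wave (shift c g)"
proof -
  have "compact ((\<lambda>x. x + c) ` support g)"
    using assms unfolding admissible_wave_def
    by (intro compact_continuous_image continuous_intros) auto
  then show ?thesis using assms concave_shift
    unfolding admissible_wave_def support_shift by (auto simp: shift_def)
qed

lemma emax0: "max (ereal a) 0 = ereal (max a 0)"
  by (simp add: max_def)

lemma emult_max0: "ereal m * max (ereal a) 0 = ereal (m * max a 0)"
  by (simp del: ereal_max add: max_def)

lemma Phi_real: "Phi \<gamma> \<mu> (ereal \<xi>) g x = ereal (1 - \<gamma> - \<mu> * max (\<xi> - x) 0) + Dg g x"
proof -
  have "ereal \<mu> * max (ereal \<xi> - ereal x) 0 = ereal (\<mu> * max (\<xi> - x) 0)"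
    using emult_max0[of \<mu> "\<xi> - x"] by simp
  then show ?thesis unfolding Phi_eq by simp
qed

lemma ereal_real_cases: "(x::ereal) \<noteq> \<infinity> \<Longrightarrow> x \<noteq> -\<infinity> \<Longrightarrow> x = ereal (real_of_ereal x)"
  by (cases x) auto

lemma eadd_le_aux:
  assumes "a - b \<le> c - d" shows "ereal a + (ereal r - ereal b) \<le> ereal c + (ereal r - ereal d)"
  using assms by simp

lemma SUP_Phi:
  assumes fin: "\<And>y. g y \<noteq> \<infinity>" and mu: "0 \<le> \<mu>"
  shows "(SUP x. Phi \<gamma> \<mu> (ereal \<xi>) g x) = ereal (1-\<gamma>) + Pc (min 1 \<mu>) g \<xi>"
proof (rule antisym)
  show "(SUP x. Phi \<gamma> \<mu> (ereal \<xi>) g x) \<le> ereal (1-\<gamma>) + Pc (min 1 \<mu>) g \<xi>"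
  proof (rule SUP_least)
    fix x
    have "Phi \<gamma> \<mu> (ereal \<xi>) g x = ereal (1 - \<gamma> - \<mu> * max (\<xi> - x) 0) + Dg g x"
      by (rule Phi_real)
    also have "\<dots> = (SUP y. ereal (1 - \<gamma> - \<mu> * max (\<xi> - x) 0) + (g y - ereal \<bar>x - y\<bar>))"
      unfolding Dg_def by (subst SUP_ereal_add_right) auto
    also have "\<dots> \<le> ereal (1-\<gamma>) + Pc (min 1 \<mu>) g \<xi>"
    proof (rule SUP_least)
      fix y
      have "ereal (1 - \<gamma> - \<mu> * max (\<xi> - x) 0) + (g y - ereal \<bar>x - y\<bar>)
            \<le> ereal (1-\<gamma>) + (g y - ereal (min 1 \<mu> * max (\<xi> - y) 0))"
      proof (cases "g y")
        case (real r)
        have "- \<mu> * max (\<xi> - x) 0 - \<bar>x - y\<bar> \<le> - (min 1 \<mu> * max (\<xi> - y) 0)"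
        proof -
          define c where "c = min 1 \<mu>"
          have c: "0 \<le> c" "c \<le> 1" "c \<le> \<mu>" using mu by (auto simp: c_def)
          have A: "c * max (\<xi> - y) 0 \<le> \<mu> * max (\<xi> - x) 0 + \<bar>x - y\<bar>"
          proof (cases "\<xi> \<le> y")
            case True
            then have "c * max (\<xi> - y) 0 = 0" by simp
            moreover have "0 \<le> \<mu> * max (\<xi> - x) 0" using mu by simp
            ultimately show ?thesis by linarith
          next
            case False
            then have m1: "max (\<xi> - y) 0 = \<xi> - y" by simp
            show ?thesis
            proof (cases "x \<le> \<xi>")
              case True
              then have m2: "max (\<xi> - x) 0 = \<xi> - x" by simp
              have "c * (\<xi> - x) \<le> \<mu> * (\<xi> - x)" using c True by (intro mult_right_mono) auto
              moreover have "c * (x - y) \<le> c * \<bar>x - y\<bar>" using c by (intro mult_left_mono) auto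
              moreover have "c * \<bar>x - y\<bar> \<le> \<bar>x - y\<bar>" using c by (intro mult_left_le_one_le) auto
              moreover have "c * (\<xi> - y) = c * (\<xi> - x) + c * (x - y)" by (simp add: algebra_simps)
              ultimately show ?thesis unfolding m1 m2 by linarith
            next
              case F2: False
              have "c * (\<xi> - y) \<le> \<xi> - y" using c False by (intro mult_left_le_one_le) auto
              moreover have "0 \<le> \<mu> * max (\<xi> - x) 0" using mu by simp
              ultimately show ?thesis unfolding m1 using F2 by linarith
            qed
          qed
          then show ?thesis unfolding c_def by linarith
        qed
        then show ?thesis unfolding real by (intro eadd_le_aux) linarith
      qed (use fin in auto)
      also have "\<dots> \<le> ereal (1-\<gamma>) + Pc (min 1 \<mu>) g \<xi>"
        unfolding Pc_def by (intro add_left_mono SUP_upper) auto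
      finally show "ereal (1 - \<gamma> - \<mu> * max (\<xi> - x) 0) + (g y - ereal \<bar>x - y\<bar>)
            \<le> ereal (1-\<gamma>) + Pc (min 1 \<mu>) g \<xi>" .
    qed
    finally show "Phi \<gamma> \<mu> (ereal \<xi>) g x \<le> ereal (1-\<gamma>) + Pc (min 1 \<mu>) g \<xi>" .
  qed
next
  have "ereal (1-\<gamma>) + Pc (min 1 \<mu>) g \<xi> = (SUP y. ereal (1-\<gamma>) + (g y - ereal (min 1 \<mu> * max (\<xi> - y) 0)))"
    unfolding Pc_def by (subst SUP_ereal_add_right) auto
  also have "\<dots> \<le> (SUP x. Phi \<gamma> \<mu> (ereal \<xi>) g x)"
  proof (rule SUP_least)
    fix y
    define x where "x = (if \<xi> \<le> y \<or> \<mu> \<le> 1 then y else \<xi>)"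
    have key: "- (min 1 \<mu> * max (\<xi> - y) 0) \<le> - \<mu> * max (\<xi> - x) 0 - \<bar>x - y\<bar>"
    proof (cases "\<xi> \<le> y")
      case True
      then have "x = y" "max (\<xi> - y) 0 = 0" by (auto simp: x_def)
      then show ?thesis by simp
    next
      case False
      show ?thesis
      proof (cases "\<mu> \<le> 1")
        case True
        then have "x = y" "min 1 \<mu> = \<mu>" by (auto simp: x_def)
        then show ?thesis by simp
      next
        case F2: False
        then have "x = \<xi>" "min 1 \<mu> = 1" using False by (auto simp: x_def)
        then show ?thesis using False by simp
      qed
    qed
    have "ereal (1-\<gamma>) + (g y - ereal (min 1 \<mu> * max (\<xi> - y) 0))
          \<le> ereal (1 - \<gamma> - \<mu> * max (\<xi> - x) 0) + (g y - ereal \<bar>x - y\<bar>)"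
    proof (cases "g y")
      case (real r) show ?thesis unfolding real using key by (intro eadd_le_aux) linarith
    qed (use fin in auto)
    also have "\<dots> \<le> ereal (1 - \<gamma> - \<mu> * max (\<xi> - x) 0) + Dg g x"
      unfolding Dg_def by (intro add_left_mono SUP_upper) auto
    also have "\<dots> = Phi \<gamma> \<mu> (ereal \<xi>) g x"
      by (rule Phi_real[symmetric])
    also have "\<dots> \<le> (SUP x. Phi \<gamma> \<mu> (ereal \<xi>) g x)" by (rule SUP_upper) auto
    finally show "ereal (1-\<gamma>) + (g y - ereal (min 1 \<mu> * max (\<xi> - y) 0)) \<le> (SUP x. Phi \<gamma> \<mu> (ereal \<xi>) g x)" .
  qed
  finally show "ereal (1-\<gamma>) + Pc (min 1 \<mu>) g \<xi> \<le> (SUP x. Phi \<gamma> \<mu> (ereal \<xi>) g x)" .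
qed

lemma Dg_lip:
  assumes fin: "\<And>y. g y \<noteq> \<infinity>"
  shows "Dg g z \<le> Dg g z' + ereal \<bar>z - z'\<bar>"
proof -
  have "Dg g z \<le> (SUP y. g y - ereal \<bar>z' - y\<bar> + ereal \<bar>z - z'\<bar>)"
    unfolding Dg_def
  proof (rule SUP_mono)
    fix y
    have "g y - ereal \<bar>z - y\<bar> \<le> g y - ereal \<bar>z' - y\<bar> + ereal \<bar>z - z'\<bar>"
    proof (cases "g y")
      case (real r) then show ?thesis by simp
    qed (use fin in auto)
    then show "\<exists>m\<in>UNIV. g y - ereal \<bar>z - y\<bar> \<le> g m - ereal \<bar>z' - m\<bar> + ereal \<bar>z - z'\<bar>" by blast
  qed
  also have "\<dots> = Dg g z' + ereal \<bar>z - z'\<bar>"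
    unfolding Dg_def by (subst SUP_ereal_add_left) auto
  finally show ?thesis .
qed

lemma Dg_lower: "g y - ereal \<bar>z - y\<bar> \<le> Dg g z"
  unfolding Dg_def by (rule SUP_upper) auto

locale monog =
  fixes g :: "real \<Rightarrow> ereal"
  assumes fin: "\<And>y. g y \<noteq> \<infinity>"
    and neg: "\<And>y. y > 0 \<Longrightarrow> g y = -\<infinity>"
    and g0: "g 0 = 0"
    and mono: "\<And>y1 y2. y1 \<le> y2 \<Longrightarrow> y2 \<le> 0 \<Longrightarrow> g y1 \<noteq> -\<infinity> \<Longrightarrow> g y1 + ereal y1 \<le> g y2 + ereal y2"
begin

lemma Dg_pos: assumes "z \<ge> 0" shows "Dg g z = ereal (-z)"
proof (rule antisym)
  show "Dg g z \<le> ereal (-z)" unfolding Dg_def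
  proof (rule SUP_least)
    fix y
    show "g y - ereal \<bar>z - y\<bar> \<le> ereal (- z)"
    proof (cases "y > 0")
      case True then show ?thesis using neg by simp
    next
      case False
      show ?thesis
      proof (cases "g y = -\<infinity>")
        case True then show ?thesis by simp
      next
        case F2: False
        have "g y + ereal y \<le> g 0 + ereal 0" using mono[of y 0] False F2 by simp
        then have "g y + ereal y \<le> 0" using g0 by simp
        moreover obtain r where "g y = ereal r" using F2 fin by (cases "g y") auto
        ultimately show ?thesis using False assms by simp
      qed
    qed
  qed
  show "ereal (-z) \<le> Dg g z" using Dg_lower[of g 0 z] g0 assms by simp
qed

lemma Dg_nonpos: assumes "z \<le> 0" shows "Dg g z = (SUP y\<in>{z..0}. g y - ereal y) + ereal z"
proof -
  have R: "(SUP y\<in>{z..0}. g y - ereal y) + ereal z = (SUP y\<in>{z..0}. g y - ereal y + ereal z)"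
    using assms by (subst SUP_ereal_add_left) auto
  have eq: "g y - ereal y + ereal z = g y - ereal \<bar>z - y\<bar>" if "z \<le> y" for y
  proof (cases "g y")
    case (real r) then show ?thesis using that by simp
  qed (use fin in auto)
  show ?thesis unfolding R
  proof (rule antisym)
    show "Dg g z \<le> (SUP y\<in>{z..0}. g y - ereal y + ereal z)" unfolding Dg_def
    proof (rule SUP_least)
      fix y
      show "g y - ereal \<bar>z - y\<bar> \<le> (SUP y\<in>{z..0}. g y - ereal y + ereal z)"
      proof (cases "y > 0")
        case True then show ?thesis using neg by simp
      next
        case False
        show ?thesis
        proof (cases "y \<ge> z")
          case True
          then show ?thesis using False eq[of y] by (intro SUP_upper2[of y]) auto
        next
          case F2: False
          show ?thesis
          proof (cases "g y = -\<infinity>")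
            case True then show ?thesis by simp
          next
            case F3: False
            have m: "g y + ereal y \<le> g z + ereal z" using mono[of y z] F2 F3 assms by simp
            obtain r where r: "g y = ereal r" using F3 fin by (cases "g y") auto
            have gz: "g z \<noteq> -\<infinity>" using m r by auto
            obtain q where q: "g z = ereal q" using gz fin by (cases "g z") auto
            have "g y - ereal \<bar>z - y\<bar> \<le> g z - ereal z + ereal z"
              using m r q F2 by simp
            then show ?thesis using assms by (intro SUP_upper2[of z]) auto
          qed
        qed
      qed
    qed
    show "(SUP y\<in>{z..0}. g y - ereal y + ereal z) \<le> Dg g z"
    proof (rule SUP_least)
      fix y assume "y \<in> {z..0}"
      then show "g y - ereal y + ereal z \<le> Dg g z" using eq[of y] Dg_lower[of g y z] by simp
    qed
  qed
qed

lemma Dg_local: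
  assumes "monog g2" and agree: "\<And>y. y \<ge> z \<Longrightarrow> g2 y = g y"
  shows "Dg g2 z = Dg g z"
proof (cases "z \<ge> 0")
  case True
  then show ?thesis using monog.Dg_pos[OF assms(1)] Dg_pos by simp
next
  case False
  have "(SUP y\<in>{z..0}. g2 y - ereal y) = (SUP y\<in>{z..0}. g y - ereal y)"
    by (rule SUP_cong) (auto simp: agree)
  then show ?thesis using monog.Dg_nonpos[OF assms(1)] Dg_nonpos False by simp
qed

end

definition sig :: "real \<Rightarrow> nat \<Rightarrow> nat \<Rightarrow> real" where
  "sig \<mu> K j = (if j = 0 then -1 else if j \<le> K + 1 then real j * \<mu> - 1 else 1 + \<mu>)"
definition bp :: "real \<Rightarrow> real \<Rightarrow> nat \<Rightarrow> real" where
  "bp m v j = m - real j * v"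
fun lin :: "real \<Rightarrow> nat \<Rightarrow> real \<Rightarrow> real \<Rightarrow> nat \<Rightarrow> real \<Rightarrow> real" where
  "lin \<mu> K m v 0 y = - y"
| "lin \<mu> K m v (Suc j) y = lin \<mu> K m v j (bp m v (Suc j)) + sig \<mu> K (Suc j) * (y - bp m v (Suc j))"
definition Wf :: "real \<Rightarrow> nat \<Rightarrow> real \<Rightarrow> real \<Rightarrow> real \<Rightarrow> real" where
  "Wf \<mu> K m v y = Min ((\<lambda>j. lin \<mu> K m v j y) ` {..K+2})"
definition epi :: "(real \<Rightarrow> real) \<Rightarrow> real \<Rightarrow> ereal" where
  "epi W y = piop (ereal (W y))"

lemma piop_ereal: "piop (ereal r) = (if 0 \<le> r then ereal r else -\<infinity>)"
  by (simp add: piop_def)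

lemma piop_neg: "x < 0 \<Longrightarrow> piop x = -\<infinity>"
  by (simp add: piop_def)

locale Wl =
  fixes \<mu> :: real and K :: nat and m v :: real
  assumes mu: "0 < \<mu>" and vpos: "0 < v" and Kmu1: "real K * \<mu> \<le> 2"
    and Kmu2: "2 < (real K + 1) * \<mu>" and mv: "m \<le> v"
begin

abbreviation "s \<equiv> sig \<mu> K"
abbreviation "b \<equiv> bp m v"
abbreviation "l \<equiv> lin \<mu> K m v"
abbreviation "W \<equiv> Wf \<mu> K m v"

lemma s_lin: "j \<le> K + 1 \<Longrightarrow> s j = real j * \<mu> - 1"
  by (simp add: sig_def)

lemma s_ge: "s j \<ge> -1"
  using mu by (simp add: sig_def)

lemma s_le: "j \<le> K \<Longrightarrow> s j \<le> 1"
proof -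
  assume j: "j \<le> K"
  have "real j * \<mu> \<le> real K * \<mu>" using j mu by (intro mult_right_mono) auto
  then show ?thesis using Kmu1 j by (simp add: sig_def)
qed

lemma s_K1: "s (Suc K) > 1"
  using Kmu2 by (simp add: sig_def algebra_simps)

lemma s_N: "s (K + 2) = 1 + \<mu>"
  by (simp add: sig_def)

lemma s_upper: "s j \<le> 1 + \<mu>"
proof (cases "j = 0 \<or> j > K + 1")
  case True then show ?thesis using mu by (auto simp: sig_def)
next
  case False
  then have j: "j \<le> K + 1" by auto
  have "real j * \<mu> \<le> (real K + 1) * \<mu>" using j mu by (intro mult_right_mono) auto
  then show ?thesis using Kmu1 j mu by (simp add: sig_def algebra_simps)
qed

lemma s_mono: "i \<le> j \<Longrightarrow> s i \<le> s j"
proof -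
  assume ij: "i \<le> j"
  show ?thesis
  proof (cases "j > K + 1")
    case True then show ?thesis using s_upper[of i] by (simp add: sig_def)
  next
    case False
    then have "j \<le> K + 1" "i \<le> K + 1" using ij by auto
    moreover have "real i * \<mu> \<le> real j * \<mu>" using ij mu by (intro mult_right_mono) auto
    ultimately show ?thesis by (simp add: s_lin)
  qed
qed

lemma b_mono: "i \<le> j \<Longrightarrow> b j \<le> b i"
  using vpos by (simp add: bp_def mult_right_mono)

lemma b_Suc: "b (Suc j) = b j - v"
  by (simp add: bp_def algebra_simps)

lemma lin_affine: "l j y = l j z + s j * (y - z)"
  by (induction j) (simp_all add: sig_def algebra_simps)

lemma lin_step: "l (Suc j) y - l j y = (s (Suc j) - s j) * (y - b (Suc j))"
  using lin_affine[of j "b (Suc j)" y] by (simp add: algebra_simps)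

lemma up: "j \<le> i \<Longrightarrow> i \<le> K + 2 \<Longrightarrow> (j < K + 2 \<Longrightarrow> b (Suc j) \<le> y) \<Longrightarrow> l j y \<le> l i y"
proof (induction i)
  case 0 then show ?case by simp
next
  case (Suc i)
  show ?case
  proof (cases "j = Suc i")
    case True then show ?thesis by simp
  next
    case False
    then have ji: "j \<le> i" using Suc.prems by simp
    have IH: "l j y \<le> l i y" using Suc.IH[OF ji] Suc.prems by simp
    have "b (Suc i) \<le> b (Suc j)" using ji by (intro b_mono) simp
    then have "0 \<le> y - b (Suc i)" using Suc.prems ji by simp
    moreover have "0 \<le> s (Suc i) - s i" using s_mono[of i "Suc i"] by simp
    ultimately have "0 \<le> l (Suc i) y - l i y" unfolding lin_step by simp
    then show ?thesis using IH by simp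
  qed
qed

lemma down: "k \<le> j \<Longrightarrow> (0 < j \<Longrightarrow> y \<le> b j) \<Longrightarrow> l j y \<le> l (j - k) y"
proof (induction k)
  case 0 then show ?case by simp
next
  case (Suc k)
  have IH: "l j y \<le> l (j - k) y" using Suc by simp
  obtain i where i: "j - k = Suc i" "j - Suc k = i" using Suc.prems by (metis Suc_diff_Suc Suc_le_lessD)
  have "b (j - k) \<ge> b j" by (intro b_mono) simp
  then have "y - b (Suc i) \<le> 0" using Suc.prems i by simp
  moreover have "0 \<le> s (Suc i) - s i" using s_mono[of i "Suc i"] by simp
  ultimately have "l (Suc i) y - l i y \<le> 0" unfolding lin_step by (simp add: mult_nonneg_nonpos)
  then show ?case using IH i by simp
qed

lemma W_piece:
  assumes "j \<le> K + 2" "0 < j \<Longrightarrow> y \<le> b j" "j < K + 2 \<Longrightarrow> b (Suc j) \<le> y"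
  shows "W y = l j y"
  unfolding Wf_def
proof (rule Min_eqI)
  show "finite ((\<lambda>j. l j y) ` {..K + 2})" by simp
  show "l j y \<in> (\<lambda>j. l j y) ` {..K + 2}" using assms by auto
  fix z assume "z \<in> (\<lambda>j. l j y) ` {..K + 2}"
  then obtain i where i: "i \<le> K + 2" "z = l i y" by auto
  show "l j y \<le> z"
  proof (cases "j \<le> i")
    case True then show ?thesis using up[of j i y] assms i by simp
  next
    case False
    then show ?thesis using down[of "j - i" j y] assms i by simp
  qed
qed

lemma W_le: "j \<le> K + 2 \<Longrightarrow> W y \<le> l j y"
  unfolding Wf_def by (rule Min_le) auto

lemma W_attained: "\<exists>j \<le> K + 2. W y = l j y"
proof -
  have "W y \<in> (\<lambda>j. l j y) ` {..K + 2}" unfolding Wf_def by (rule Min_in) auto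
  then show ?thesis by auto
qed

lemma piece_exists:
  "\<exists>j \<le> K + 2. (0 < j \<longrightarrow> y \<le> b j) \<and> (j < K + 2 \<longrightarrow> b (Suc j) \<le> y) \<and> (b (Suc K) \<le> y \<longrightarrow> j \<le> K)"
proof (cases "b 1 \<le> y")
  case True
  then show ?thesis by (intro exI[of _ 0]) auto
next
  case False
  define r where "r = (m - y) / v"
  have r1: "r > 1" using False vpos by (simp add: r_def bp_def field_simps)
  have c1: "of_int \<lceil>r\<rceil> - 1 < r" "r \<le> of_int \<lceil>r\<rceil>" using ceiling_correct[of r] by auto
  have cpos: "\<lceil>r\<rceil> \<ge> 2" using r1 c1 by linarith
  define j where "j = nat \<lceil>r\<rceil> - 1"
  have n1: "real (nat \<lceil>r\<rceil>) = of_int \<lceil>r\<rceil>" using cpos by simp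
  have n2: "1 \<le> nat \<lceil>r\<rceil>" using cpos by (auto simp: le_nat_iff)
  have "real (nat \<lceil>r\<rceil> - 1) = real (nat \<lceil>r\<rceil>) - 1" using n2 by (subst of_nat_diff) auto
  then have jr: "real j = of_int \<lceil>r\<rceil> - 1" using n1 by (simp add: j_def)
  have n3: "2 \<le> nat \<lceil>r\<rceil>" using cpos by (auto simp: le_nat_iff)
  have jpos: "j \<ge> 1" using n3 by (simp add: j_def)
  have "real j < r" using jr c1 by linarith
  then have "real j * v < m - y" using vpos by (simp add: r_def field_simps)
  then have A: "y < b j" by (simp add: bp_def)
  have "r \<le> real j + 1" using jr c1 by linarith
  then have "m - y \<le> (real j + 1) * v" using vpos by (simp add: r_def field_simps)
  then have B: "b (Suc j) \<le> y" by (simp add: bp_def algebra_simps)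
  show ?thesis
  proof (cases "j \<le> K + 2")
    case True
    have "b (Suc K) \<le> y \<longrightarrow> j \<le> K"
    proof
      assume h: "b (Suc K) \<le> y"
      show "j \<le> K"
      proof (rule ccontr)
        assume "\<not> j \<le> K"
        then have "Suc K \<le> j" by simp
        then have "b j \<le> b (Suc K)" by (rule b_mono)
        then show False using A h by simp
      qed
    qed
    then show ?thesis using True A B jpos by (intro exI[of _ j]) auto
  next
    case False
    have "b j \<le> b (K + 2)" using False by (intro b_mono) simp
    moreover have "b (K + 2) \<le> b (Suc K)" by (intro b_mono) simp
    ultimately show ?thesis using A by (intro exI[of _ "K + 2"]) auto
  qed
qed

lemma W_concave:
  assumes "0 \<le> t" "t \<le> 1"
  shows "t * W x + (1 - t) * W y \<le> W (t * x + (1 - t) * y)"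
proof -
  obtain j where j: "j \<le> K + 2" "W (t * x + (1 - t) * y) = l j (t * x + (1 - t) * y)"
    using W_attained by blast
  have a1: "l j (t * x + (1 - t) * y) = l j x + s j * (t * x + (1 - t) * y - x)" by (rule lin_affine)
  have a2: "l j y = l j x + s j * (y - x)" by (rule lin_affine)
  have "l j (t * x + (1 - t) * y) = t * l j x + (1 - t) * l j y"
    unfolding a1 a2 by (simp add: algebra_simps)
  moreover have "t * W x \<le> t * l j x" using W_le[OF j(1)] assms by (intro mult_left_mono) auto
  moreover have "(1 - t) * W y \<le> (1 - t) * l j y" using W_le[OF j(1)] assms by (intro mult_left_mono) auto
  ultimately show ?thesis using j by linarith
qed

lemma W_lip: "\<bar>W y - W z\<bar> \<le> (1 + \<mu>) * \<bar>y - z\<bar>"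
proof -
  have one: "W y - W z \<le> (1 + \<mu>) * \<bar>y - z\<bar>" for y z
  proof -
    obtain j where j: "j \<le> K + 2" "W z = l j z" using W_attained by blast
    have "W y \<le> l j y" using W_le[OF j(1)] .
    also have "\<dots> = l j z + s j * (y - z)" by (rule lin_affine)
    also have "s j * (y - z) \<le> \<bar>s j\<bar> * \<bar>y - z\<bar>" by (metis abs_ge_self abs_mult)
    also have "\<bar>s j\<bar> \<le> 1 + \<mu>" using s_ge[of j] s_upper[of j] mu by auto
    then have "\<bar>s j\<bar> * \<bar>y - z\<bar> \<le> (1 + \<mu>) * \<bar>y - z\<bar>" by (intro mult_right_mono) auto
    finally show ?thesis using j by linarith
  qed
  show ?thesis using one[of y z] one[of z y] by (simp add: abs_minus_commute abs_le_iff)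
qed

lemma W_cont: "continuous_on A W"
proof -
  have "(1 + \<mu>)-lipschitz_on A W"
    by (rule lipschitz_onI) (use W_lip mu in \<open>auto simp: dist_real_def\<close>)
  then show ?thesis by (rule lipschitz_on_continuous_on)
qed

lemma W0: "W 0 = 0"
proof -
  have "b 1 \<le> 0" using mv by (simp add: bp_def)
  then show ?thesis using W_piece[of 0 0] by simp
qed

lemma W_pos_neg: "y > 0 \<Longrightarrow> W y < 0"
  using W_le[of 0 y] by simp

lemma W_mono: "y1 \<le> y2 \<Longrightarrow> W y1 + y1 \<le> W y2 + y2"
proof -
  assume y: "y1 \<le> y2"
  obtain j where j: "j \<le> K + 2" "W y2 = l j y2" using W_attained by blast
  have "W y1 \<le> l j y1" using W_le[OF j(1)] .
  also have "\<dots> = l j y2 + s j * (y1 - y2)" by (rule lin_affine)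
  also have "s j * (y1 - y2) \<le> (-1) * (y1 - y2)"
    using s_ge[of j] y by (intro mult_right_mono_neg) auto
  finally show ?thesis using j by simp
qed

lemma W_supp_conv: "W y1 \<ge> 0 \<Longrightarrow> y1 \<le> y \<Longrightarrow> y \<le> 0 \<Longrightarrow> W y \<ge> 0"
proof -
  assume a: "W y1 \<ge> 0" "y1 \<le> y" "y \<le> 0"
  show "W y \<ge> 0"
  proof (cases "y1 = 0")
    case True then show ?thesis using a W0 by simp
  next
    case False
    then have y1n: "y1 < 0" using a by simp
    define t where "t = y / y1"
    have t: "0 \<le> t" "t \<le> 1" using a y1n by (auto simp: t_def field_simps)
    have "t * y1 + (1 - t) * 0 = y" using y1n by (simp add: t_def)
    then have "t * W y1 + (1 - t) * W 0 \<le> W y" using W_concave[OF t, of y1 0] by simp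
    then show ?thesis using W0 a t by (smt (verit) mult_nonneg_nonneg)
  qed
qed

lemma W_conc3: "W x \<ge> 0 \<Longrightarrow> W z \<ge> 0 \<Longrightarrow> x \<le> y \<Longrightarrow> y \<le> z \<Longrightarrow> W y \<ge> 0"
proof -
  assume a: "W x \<ge> 0" "W z \<ge> 0" "x \<le> y" "y \<le> z"
  show "W y \<ge> 0"
  proof (cases "x = z")
    case True then show ?thesis using a by simp
  next
    case False
    then have xz: "x < z" using a by simp
    define t where "t = (z - y) / (z - x)"
    have t: "0 \<le> t" "t \<le> 1" using a xz by (auto simp: t_def field_simps)
    have zt: "t * (z - x) = z - y" using xz by (simp add: t_def)
    have "t * x + (1 - t) * z = z - t * (z - x)" by algebra
    then have "t * x + (1 - t) * z = y" using zt by simp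
    then have "t * W x + (1 - t) * W z \<le> W y" using W_concave[OF t, of x z] by simp
    then show ?thesis using a t by (smt (verit) mult_nonneg_nonneg)
  qed
qed

definition Dt :: "real \<Rightarrow> real" where
  "Dt x = (if b (Suc K) \<le> x then W x else W (b (Suc K)) + x - b (Suc K))"

lemma W_e: "W (b (Suc K)) = l K (b (Suc K))" "W (b (Suc K)) = l (Suc K) (b (Suc K))"
proof -
  show "W (b (Suc K)) = l K (b (Suc K))"
    by (rule W_piece) (auto intro: b_mono)
  show "W (b (Suc K)) = l (Suc K) (b (Suc K))"
    by (rule W_piece) (auto intro: b_mono)
qed

lemma Dt_upper: "W y - \<bar>x - y\<bar> \<le> Dt x"
proof (cases "b (Suc K) \<le> x")
  case True
  obtain j where j: "j \<le> K + 2" "0 < j \<longrightarrow> x \<le> b j" "j < K + 2 \<longrightarrow> b (Suc j) \<le> x" "j \<le> K"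
    using piece_exists[of x] True by blast
  have Wx: "W x = l j x" using W_piece j by simp
  have "W y \<le> l j y" using W_le j by simp
  also have "\<dots> = W x + s j * (y - x)" using lin_affine[of j y x] Wx by simp
  also have "s j * (y - x) \<le> \<bar>s j\<bar> * \<bar>y - x\<bar>" by (metis abs_ge_self abs_mult)
  also have "\<bar>s j\<bar> * \<bar>y - x\<bar> \<le> 1 * \<bar>y - x\<bar>"
    using s_ge[of j] s_le[of j] j by (intro mult_right_mono) auto
  finally show ?thesis using True by (simp add: Dt_def abs_minus_commute)
next
  case False
  define e where "e = b (Suc K)"
  have "W y \<le> W e + (y - e)"
  proof (cases "e \<le> y")
    case True
    have a: "W y \<le> l K y" by (rule W_le) simp
    have b: "l K y = l K e + s K * (y - e)" by (rule lin_affine)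
    have c: "l K e = W e" unfolding e_def by (rule W_e(1)[symmetric])
    have d: "s K * (y - e) \<le> y - e" using mult_right_mono[of "s K" 1 "y - e"] s_le[of K] True by simp
    show ?thesis using a b c d by linarith
  next
    case F2: False
    have a: "W y \<le> l (Suc K) y" by (rule W_le) simp
    have b: "l (Suc K) y = l (Suc K) e + s (Suc K) * (y - e)" by (rule lin_affine)
    have c: "l (Suc K) e = W e" unfolding e_def by (rule W_e(2)[symmetric])
    have d: "s (Suc K) * (y - e) \<le> y - e" using mult_right_mono_neg[of 1 "s (Suc K)" "y - e"] s_K1 F2 by simp
    show ?thesis using a b c d by linarith
  qed
  then show ?thesis using False by (simp add: Dt_def e_def)
qed

end

lemma uniq_rec:
  assumes m1: "monog g1" and m2: "monog g2" and v: "v > 0"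
    and e1: "\<And>x. g1 (x - v) = piop (ereal (A x) + Dg g1 x)"
    and e2: "\<And>x. g2 (x - v) = piop (ereal (A x) + Dg g2 x)"
  shows "g1 = g2"
proof -
  have P: "\<forall>y. y \<ge> - (real n * v) \<longrightarrow> g1 y = g2 y" for n
  proof (induction n)
    case 0
    show ?case
    proof (intro allI impI)
      fix y :: real assume "y \<ge> - (real 0 * v)"
      then have "y \<ge> 0" by simp
      then show "g1 y = g2 y"
        using monog.neg[OF m1, of y] monog.neg[OF m2, of y] monog.g0[OF m1] monog.g0[OF m2]
        by (cases "y = 0") auto
    qed
  next
    case (Suc n)
    show ?case
    proof (intro allI impI)
      fix y :: real assume y: "y \<ge> - (real (Suc n) * v)"
      show "g1 y = g2 y"
      proof (cases "y \<ge> - (real n * v)")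
        case True then show ?thesis using Suc.IH by blast
      next
        case False
        have agree: "\<And>y'. y' \<ge> y + v \<Longrightarrow> g2 y' = g1 y'"
          using Suc.IH y by (auto simp: algebra_simps)
        have D: "Dg g2 (y + v) = Dg g1 (y + v)"
          by (rule monog.Dg_local[OF m1 m2 agree]) simp
        have "g1 y = piop (ereal (A (y + v)) + Dg g1 (y + v))" using e1[of "y + v"] by simp
        moreover have "g2 y = piop (ereal (A (y + v)) + Dg g2 (y + v))" using e2[of "y + v"] by simp
        ultimately show ?thesis using D by simp
      qed
    qed
  qed
  show ?thesis
  proof (rule ext)
    fix y :: real
    obtain n :: nat where n: "real n \<ge> - y / v" using real_arch_simple by blast
    then have "real n * v \<ge> - y" using v by (simp add: field_simps)
    then show "g1 y = g2 y" using P[of n] by auto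
  qed
qed

locale Wid = Wl +
  fixes \<gamma> S :: real
  assumes ga: "0 < \<gamma>" "\<gamma> < 1" and mS: "m = min S v"
    and R1: "1 - \<gamma> - \<mu> * max (S - v) 0 = v" and Cc: "S \<le> v \<or> \<mu> < 1"
begin

definition aa :: "real \<Rightarrow> real" where "aa x = 1 - \<gamma> - \<mu> * max (S - x) 0"

lemma R1': "v = 1 - \<gamma> - \<mu> * (S - m)"
proof (cases "S \<le> v")
  case True then show ?thesis using R1 mS by (simp add: max_def)
next
  case False then show ?thesis using R1 mS by (simp add: max_def)
qed

lemma b1: "b 1 = m - v" "b 1 \<le> 0"
  using mv by (simp_all add: bp_def)

lemma bK_le_b1: "b (Suc K) \<le> b 1" by (intro b_mono) simp

lemma aff:
  assumes j: "j \<le> K" and x: "x < S"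
  shows "l (Suc j) (x - v) = aa x + l j x"
proof -
  have sj: "s j = real j * \<mu> - 1" using j by (intro s_lin) simp
  have sj1: "s (Suc j) = (real j + 1) * \<mu> - 1" using j s_lin[of "Suc j"] by simp
  have a: "l j (b (Suc j)) = l j x + s j * (b (Suc j) - x)" by (rule lin_affine)
  have l1: "l (Suc j) (x - v) = l j (b (Suc j)) + s (Suc j) * (x - v - b (Suc j))" by simp
  have bs: "b (Suc j) = m - (real j + 1) * v" by (simp add: bp_def)
  have "l (Suc j) (x - v) = l j x + s j * (b (Suc j) - x) + s (Suc j) * (x - v - b (Suc j))"
    using l1 a by simp
  also have "\<dots> = l j x + (real j * \<mu> - 1) * (m - (real j + 1) * v - x)
       + ((real j + 1) * \<mu> - 1) * (x - v - (m - (real j + 1) * v))"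
    unfolding sj sj1 bs by simp
  also have "\<dots> = l j x + v - \<mu> * (m - x)" by (simp add: algebra_simps)
  also have "\<dots> = aa x + l j x" using R1' x by (simp add: aa_def max_def algebra_simps)
  finally show ?thesis .
qed

lemma W_piece0: "y \<ge> b 1 \<Longrightarrow> W y = - y"
  using W_piece[of 0 y] by simp

lemma Dt_pos: "x \<ge> b 1 \<Longrightarrow> Dt x = - x"
  using W_piece0 bK_le_b1 by (simp add: Dt_def)

lemma agree: "(W (x - v) = aa x + Dt x) \<or> (W (x - v) < 0 \<and> aa x + Dt x < 0)"
proof (cases "x \<le> 0")
  case True
  show ?thesis
  proof (cases "x < S")
    case xS: True
    have xm: "x \<le> m" using xS True vpos mS by auto
    show ?thesis
    proof (cases "b (Suc K) \<le> x")
      case True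
      obtain j where j: "j \<le> K + 2" "0 < j \<longrightarrow> x \<le> b j" "j < K + 2 \<longrightarrow> b (Suc j) \<le> x" "j \<le> K"
        using piece_exists[of x] True by blast
      have Wx: "W x = l j x" using W_piece j by simp
      have Dx: "Dt x = l j x" using True Wx by (simp add: Dt_def)
      have "W (x - v) = l (Suc j) (x - v)"
      proof (rule W_piece)
        show "Suc j \<le> K + 2" using j by simp
        show "x - v \<le> b (Suc j)"
        proof (cases "j = 0")
          case True then show ?thesis using xm by (simp add: bp_def)
        next
          case False then show ?thesis using j by (simp add: b_Suc)
        qed
        show "b (Suc (Suc j)) \<le> x - v" using j by (simp add: b_Suc)
      qed
      then show ?thesis using aff[OF j(4) xS] Dx by simp
    next
      case False
      define e where "e = b (Suc K)"
      have xe: "x < e" using False by (simp add: e_def)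
      have eS: "e < S"
      proof -
        have "e \<le> b 1" using bK_le_b1 by (simp add: e_def)
        then show ?thesis using b1 vpos mS by auto
      qed
      have Dx: "Dt x = W e + x - e" using False by (simp add: Dt_def e_def)
      have W1: "W (x - v) = l (K + 2) (x - v)"
        by (rule W_piece) (use xe in \<open>auto simp: e_def b_Suc\<close>)
      have a1: "l (K + 2) (x - v) = l (K + 2) (e - v) + s (K + 2) * (x - e)"
        using lin_affine[of "K + 2" "x - v" "e - v"] by simp
      have a2: "l (K + 2) (e - v) = l (Suc K) (e - v)"
        by (simp add: e_def b_Suc)
      have a3: "l (Suc K) (e - v) = aa e + l K e" using aff[of K e] eS by simp
      have a4: "l K e = W e" using W_e(1) by (simp add: e_def)
      have a5: "aa x = aa e + \<mu> * (x - e)" using xe eS by (simp add: aa_def max_def algebra_simps)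
      have "W (x - v) = aa x + Dt x"
        using W1 a1 a2 a3 a4 a5 Dx s_N by (simp add: algebra_simps)
      then show ?thesis by simp
    qed
  next
    case xS: False
    then have Sle: "S \<le> 0" using True by simp
    then have m: "m = S" using mS vpos by simp
    have vg: "v = 1 - \<gamma>" using R1 Sle vpos by (simp add: max_def)
    have ax: "aa x = v" using xS vg by (simp add: aa_def max_def)
    have "x \<ge> b 1" using b1 m xS vpos by simp
    then have Dx: "Dt x = - x" by (rule Dt_pos)
    have "x - v \<ge> b 1" using b1 m xS by simp
    then have "W (x - v) = v - x" using W_piece0 by simp
    then show ?thesis using ax Dx by simp
  qed
next
  case False
  then have xpos: "x > 0" by simp
  have Dx: "Dt x = - x" using xpos b1 by (intro Dt_pos) simp
  show ?thesis
  proof (cases "S \<le> x")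
    case True
    have ax: "aa x = 1 - \<gamma>" using True by (simp add: aa_def max_def)
    show ?thesis
    proof (cases "S \<le> v")
      case Sv: True
      then have m: "m = S" using mS by simp
      have vg: "v = 1 - \<gamma>" using R1 Sv by (simp add: max_def)
      have "x - v \<ge> b 1" using b1 m True by simp
      then have "W (x - v) = v - x" using W_piece0 by simp
      then show ?thesis using ax Dx vg by simp
    next
      case Sv: False
      then have mu1: "\<mu> < 1" using Cc by simp
      have m: "m = v" using mS Sv by simp
      have "1 - \<gamma> = v + \<mu> * (S - v)" using R1 Sv by (simp add: max_def)
      moreover have "\<mu> * (S - v) < 1 * (S - v)" using mu1 Sv by (intro mult_strict_right_mono) auto
      ultimately have "1 - \<gamma> < S" by simp
      then have "aa x + Dt x < 0" using ax Dx True by simp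
      moreover have "W (x - v) < 0" using W_pos_neg Sv True by simp
      ultimately show ?thesis by simp
    qed
  next
    case False
    then have xS: "x < S" by simp
    have id1: "l 1 (x - v) = aa x + Dt x" using aff[of 0 x] xS Dx by simp
    show ?thesis
    proof (cases "x \<le> m")
      case True
      have "W (x - v) = l 1 (x - v)"
        by (rule W_piece) (use True xpos b1 in \<open>auto simp: bp_def\<close>)
      then show ?thesis using id1 by simp
    next
      case xm: False
      then have m: "m = v" "v < S" using mS xS by (auto simp: min_def split: if_splits)
      then have mu1: "\<mu> < 1" using Cc by simp
      have xv: "x > v" using xm m by simp
      have "l 1 (x - v) = (\<mu> - 1) * (x - v)"
        using m by (simp add: bp_def sig_def)
      moreover have "(\<mu> - 1) * (x - v) < 0" using mu1 xv by (simp add: mult_neg_pos)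
      moreover have "W (x - v) < 0" using W_pos_neg xv by simp
      ultimately show ?thesis using id1 by simp
    qed
  qed
qed

lemma Dg_le_Dt: "Dg (epi W) x \<le> ereal (Dt x)"
  unfolding Dg_def
proof (rule SUP_least)
  fix y
  show "epi W y - ereal \<bar>x - y\<bar> \<le> ereal (Dt x)"
    using Dt_upper[of y x] by (simp add: epi_def piop_ereal)
qed

lemma claimC: "epi W (x - v) = piop (ereal (aa x) + Dg (epi W) x)"
proof (cases "W (x - v) \<ge> 0")
  case True
  then have eq: "W (x - v) = aa x + Dt x" using agree[of x] by auto
  have W0': "W 0 \<ge> 0" using W0 by simp
  have "ereal (Dt x) \<le> Dg (epi W) x"
  proof (cases "x > 0")
    case True
    have "Dt x = - x" using True b1 by (intro Dt_pos) simp
    then show ?thesis using Dg_lower[of "epi W" 0 x] True W0 by (simp add: epi_def piop_ereal)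
  next
    case False
    show ?thesis
    proof (cases "b (Suc K) \<le> x")
      case True
      have "W x \<ge> 0" using W_conc3[of "x - v" 0 x] \<open>W (x - v) \<ge> 0\<close> W0' False vpos by simp
      then show ?thesis using Dg_lower[of "epi W" x x] True by (simp add: epi_def piop_ereal Dt_def)
    next
      case F2: False
      define e where "e = b (Suc K)"
      have e0: "e \<le> 0" using bK_le_b1 b1 by (simp add: e_def)
      have "W e \<ge> 0" using W_conc3[of "x - v" 0 e] \<open>W (x - v) \<ge> 0\<close> W0' F2 e0 vpos
        by (simp add: e_def)
      have d1: "Dt x = W e - \<bar>x - e\<bar>" using F2 by (simp add: Dt_def e_def)
      have d2: "epi W e = ereal (W e)" using \<open>W e \<ge> 0\<close> by (simp add: epi_def piop_ereal)
      show ?thesis using Dg_lower[of "epi W" e x] d1 d2 by simp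
    qed
  qed
  then have "Dg (epi W) x = ereal (Dt x)" using Dg_le_Dt by (intro antisym) auto
  then show ?thesis using eq True by (simp add: epi_def piop_ereal)
next
  case False
  have neg: "aa x + Dt x < 0" using agree[of x] False by auto
  have "ereal (aa x) + Dg (epi W) x \<le> ereal (aa x) + ereal (Dt x)"
    using Dg_le_Dt by (intro add_left_mono)
  also have "\<dots> < 0" using neg by simp
  finally have "piop (ereal (aa x) + Dg (epi W) x) = -\<infinity>" by (rule piop_neg)
  then show ?thesis using False by (simp add: epi_def piop_ereal)
qed

lemma monog_W: "monog (epi W)"
proof
  fix y show "epi W y \<noteq> \<infinity>" by (simp add: epi_def piop_ereal)
next
  fix y :: real assume "y > 0" then show "epi W y = -\<infinity>"
    using W_pos_neg[OF \<open>y > 0\<close>] by (simp add: epi_def piop_ereal)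
next
  show "epi W 0 = 0" using W0 by (simp add: epi_def piop_ereal zero_ereal_def)
next
  fix y1 y2 :: real assume a: "y1 \<le> y2" "y2 \<le> 0" "epi W y1 \<noteq> -\<infinity>"
  then have w1: "W y1 \<ge> 0" by (simp add: epi_def piop_ereal split: if_splits)
  then have w2: "W y2 \<ge> 0" using W_supp_conv a by blast
  show "epi W y1 + ereal y1 \<le> epi W y2 + ereal y2"
    using W_mono[OF a(1)] w1 w2 by (simp add: epi_def piop_ereal)
qed

end

lemma piop_cases: "piop x = -\<infinity> \<or> (piop x = x \<and> 0 \<le> x)"
  by (simp add: piop_def)

lemma piop_ge: "piop x \<noteq> -\<infinity> \<Longrightarrow> piop x = x \<and> 0 \<le> x"
  by (simp add: piop_def split: if_splits)

lemma concave_between: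
  assumes cc: "concave_ext g" and fin: "\<And>y. g y \<noteq> \<infinity>"
    and a: "g y1 \<noteq> -\<infinity>" "g y2 \<noteq> -\<infinity>" "y1 \<le> y" "y \<le> y2"
  shows "g y \<noteq> -\<infinity>"
proof (cases "y = y1 \<or> y = y2")
  case True then show ?thesis using a by auto
next
  case False
  then have lt: "y1 < y" "y < y2" using a by auto
  define t where "t = (y2 - y) / (y2 - y1)"
  have t: "0 < t" "t < 1" using lt by (auto simp: t_def field_simps)
  have zt: "t * (y2 - y1) = y2 - y" using lt by (simp add: t_def)
  have "t * y1 + (1 - t) * y2 = y2 - t * (y2 - y1)" by algebra
  then have yy: "t * y1 + (1 - t) * y2 = y" using zt by simp
  obtain r1 r2 where r: "g y1 = ereal r1" "g y2 = ereal r2" using a fin by (metis ereal_real_cases)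
  have "ereal t * g y1 + ereal (1 - t) * g y2 \<le> g y"
    using cc t yy unfolding concave_ext_def by metis
  then show ?thesis using r by auto
qed

locale wpar =
  fixes \<gamma> \<mu> :: real
  assumes ga0: "0 < \<gamma>" and ga1: "\<gamma> < 1" and mu0: "0 < \<mu>" and mu1: "\<mu> \<noteq> 1"
begin

lemma GL:
  assumes adm: "admissible_wave g" and st: "step \<gamma> \<mu> g = shift v g"
    and neg: "\<And>y. y > 0 \<Longrightarrow> g y = -\<infinity>" and g0ne: "g 0 \<noteq> -\<infinity>" and pos: "\<exists>y. g y > 0"
  shows "v > 0 \<and> monog g \<and> (\<exists>L<0. \<forall>y. g y \<noteq> -\<infinity> \<longleftrightarrow> L \<le> y \<and> y \<le> 0) \<and>
    (\<exists>S'. (\<forall>x. g (x - v) = piop (ereal (1 - \<gamma> - \<mu> * max (S' - x) 0) + Dg g x)) \<and>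
       (sfun \<gamma> \<mu> g = ereal S' \<or> (\<forall>y. g y \<noteq> -\<infinity> \<longrightarrow> S' - v < y)))"
proof -
  have fin: "\<And>y. g y \<noteq> \<infinity>" using adm by (simp add: admissible_wave_def)
  have cc: "concave_ext g" using adm by (simp add: admissible_wave_def)
  define S where "S = sfun \<gamma> \<mu> g"
  have stx: "g (x - v) = piop (Phi \<gamma> \<mu> S g x)" for x
    using fun_cong[OF st, of x] by (simp add: step_def shift_def S_def)
  have vals: "g y \<noteq> -\<infinity> \<Longrightarrow> 0 \<le> g y" for y
    using stx[of "y + v"] piop_ge by force
  have g0pos: "0 \<le> g 0" using vals g0ne by simp
  have Dnotinf: "Dg g z \<noteq> \<infinity>" for z
  proof
    assume inf: "Dg g z = \<infinity>"
    have "Dg g z \<le> Dg g v + ereal \<bar>z - v\<bar>" by (rule Dg_lip[of g, OF fin])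
    then have "Dg g v = \<infinity>" using inf by (cases "Dg g v") auto
    then have "Phi \<gamma> \<mu> S g v = \<infinity>" by (simp add: Phi_eq)
    then have "g (v - v) = \<infinity>" using stx[of v] by (simp add: piop_def)
    then show False using fin by simp
  qed
  have Dnotminf: "Dg g z \<noteq> -\<infinity>" for z
  proof -
    have "g 0 - ereal \<bar>z - 0\<bar> \<le> Dg g z" by (rule Dg_lower)
    moreover have "g 0 - ereal \<bar>z - 0\<bar> \<noteq> -\<infinity>" using g0ne fin[of 0] by (cases "g 0") auto
    ultimately show ?thesis by auto
  qed
  define d where "d z = real_of_ereal (Dg g z)" for z
  have Dd: "Dg g z = ereal (d z)" for z using Dnotinf Dnotminf by (simp add: d_def ereal_real_cases)
  have dlip: "\<bar>d z - d z'\<bar> \<le> \<bar>z - z'\<bar>" for z z'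
  proof -
    have "d z \<le> d z' + \<bar>z - z'\<bar>" using Dg_lip[of g z z', OF fin] by (simp add: Dd)
    moreover have "d z' \<le> d z + \<bar>z' - z\<bar>" using Dg_lip[of g z' z, OF fin] by (simp add: Dd)
    ultimately show ?thesis by (simp add: abs_le_iff abs_minus_commute)
  qed
  have Snotinf: "S \<noteq> \<infinity>"
  proof
    assume "S = \<infinity>"
    then have "Phi \<gamma> \<mu> S g v = -\<infinity>" using mu0 by (simp add: Phi_eq Dd)
    then have "g 0 = -\<infinity>" using stx[of v] by (simp add: piop_def)
    then show False using g0ne by simp
  qed
  define A where "A x = (if S = -\<infinity> then 1 - \<gamma> else 1 - \<gamma> - \<mu> * max (real_of_ereal S - x) 0)" for x
  define F where "F x = A x + d x" for x
  have PhiF: "Phi \<gamma> \<mu> S g x = ereal (F x)" for x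
  proof (cases "S = -\<infinity>")
    case True then show ?thesis by (simp add: Phi_eq Dd F_def A_def)
  next
    case False
    then have "S = ereal (real_of_ereal S)" using Snotinf by (simp add: ereal_real_cases)
    then have "Phi \<gamma> \<mu> S g x = Phi \<gamma> \<mu> (ereal (real_of_ereal S)) g x" by simp
    also have "\<dots> = ereal (F x)" using False by (simp add: Phi_real Dd F_def A_def)
    finally show ?thesis .
  qed
  have gF: "g (x - v) = piop (ereal (F x))" for x using stx PhiF by simp
  have gF': "g y = piop (ereal (F (y + v)))" for y using gF[of "y + v"] by simp
  have Amono: "x \<le> x' \<Longrightarrow> A x \<le> A x'" for x x'
    using mu0 by (auto simp: A_def intro!: mult_left_mono)
  have Alip: "\<bar>A x - A x'\<bar> \<le> \<mu> * \<bar>x - x'\<bar>" for x x'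
  proof (cases "S = -\<infinity>")
    case True then show ?thesis using mu0 by (simp add: A_def)
  next
    case False
    define p where "p = max (real_of_ereal S - x) 0"
    define q where "q = max (real_of_ereal S - x') 0"
    have "\<bar>p - q\<bar> \<le> \<bar>x - x'\<bar>"
      by (simp add: p_def q_def max_def abs_if)
    then have "\<mu> * \<bar>p - q\<bar> \<le> \<mu> * \<bar>x - x'\<bar>"
      using mu0 by (intro mult_left_mono) auto
    moreover have "\<bar>\<mu> * q - \<mu> * p\<bar> = \<mu> * \<bar>p - q\<bar>"
    proof -
      have "\<mu> * q - \<mu> * p = \<mu> * (q - p)" by (simp add: right_diff_distrib)
      then show ?thesis using mu0 by (simp add: abs_mult abs_minus_commute)
    qed
    moreover have "A x - A x' = \<mu> * q - \<mu> * p" using False by (simp add: A_def p_def q_def)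
    ultimately show ?thesis by simp
  qed
  have Flip: "\<bar>F x - F x'\<bar> \<le> (1 + \<mu>) * \<bar>x - x'\<bar>" for x x'
    using Alip[of x x'] dlip[of x x'] by (simp add: F_def algebra_simps)
  have Fv: "F v = 0"
  proof -
    have "g 0 = piop (ereal (F v))" using gF'[of 0] by simp
    then have Fv0: "F v \<ge> 0" using g0ne by (auto simp: piop_ereal split: if_splits)
    show ?thesis
    proof (rule ccontr)
      assume "F v \<noteq> 0"
      then have Fvp: "F v > 0" using Fv0 by simp
      define \<delta> where "\<delta> = F v / (2 * (1 + \<mu>))"
      have dp: "\<delta> > 0" using Fvp mu0 by (simp add: \<delta>_def)
      have "\<bar>F (v + \<delta>) - F v\<bar> \<le> (1 + \<mu>) * \<delta>" using Flip[of "v + \<delta>" v] dp by simp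
      moreover have "(1 + \<mu>) * \<delta> = F v / 2" using mu0 by (simp add: \<delta>_def field_simps)
      ultimately have "F (v + \<delta>) > 0" using Fvp by linarith
      then have "g \<delta> \<noteq> -\<infinity>" using gF'[of \<delta>] by (simp add: piop_ereal add.commute)
      then show False using neg dp by simp
    qed
  qed
  have g0: "g 0 = 0" using gF'[of 0] Fv by (simp add: piop_ereal zero_ereal_def)
  have greal: "g y \<noteq> -\<infinity> \<Longrightarrow> g y = ereal (F (y + v)) \<and> 0 \<le> F (y + v)" for y
    using gF'[of y] by (auto simp: piop_ereal split: if_splits)
  have supp: "support g = {y. g y \<noteq> -\<infinity>}"
    using vals by (auto simp: support_def)
  have cpt: "compact {y. g y \<noteq> -\<infinity>}" using adm supp by (simp add: admissible_wave_def)
  define L where "L = Inf {y. g y \<noteq> -\<infinity>}"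
  have ne: "{y. g y \<noteq> -\<infinity>} \<noteq> {}" using g0ne by auto
  have bdd: "bdd_below {y. g y \<noteq> -\<infinity>}" using cpt by (intro bounded_imp_bdd_below compact_imp_bounded)
  have Lin: "g L \<noteq> -\<infinity>" using closed_contains_Inf[OF ne bdd compact_imp_closed[OF cpt]] by (simp add: L_def)
  have suppchar: "g y \<noteq> -\<infinity> \<longleftrightarrow> L \<le> y \<and> y \<le> 0" for y
  proof
    assume "g y \<noteq> -\<infinity>"
    then show "L \<le> y \<and> y \<le> 0" using neg bdd by (auto simp: L_def intro: cInf_lower) (meson not_le)
  next
    assume "L \<le> y \<and> y \<le> 0"
    then show "g y \<noteq> -\<infinity>" using concave_between[OF cc fin Lin g0ne] by blast
  qed
  have Lneg: "L < 0"
  proof -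
    obtain y where y: "g y > 0" using pos by blast
    then have gy: "g y \<noteq> -\<infinity>" by auto
    have "y \<noteq> 0" using y g0 by auto
    then show ?thesis using suppchar[of y] gy by auto
  qed
  have mono: "g y1 + ereal y1 \<le> g y2 + ereal y2" if "y1 \<le> y2" "y2 \<le> 0" "g y1 \<noteq> -\<infinity>" for y1 y2
  proof -
    have g2: "g y2 \<noteq> -\<infinity>" using suppchar that by auto
    have "A (y1 + v) \<le> A (y2 + v)" using that by (intro Amono) simp
    moreover have "d (y1 + v) \<le> d (y2 + v) + (y2 - y1)" using dlip[of "y1 + v" "y2 + v"] that by simp
    ultimately have "F (y1 + v) + y1 \<le> F (y2 + v) + y2" by (simp add: F_def)
    then show ?thesis using greal[OF that(3)] greal[OF g2] by simp
  qed
  have mg: "monog g"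
    using fin neg g0 mono by (unfold_locales) auto
  have vpos: "v > 0"
  proof (rule ccontr)
    assume "\<not> v > 0"
    then have v0: "v \<le> 0" by simp
    have d0: "d 0 = 0" using monog.Dg_pos[OF mg, of 0] by (simp add: Dd zero_ereal_def)
    have F0: "F 0 \<le> 0"
    proof (cases "v = 0")
      case True then show ?thesis using Fv by simp
    next
      case False
      then have "- v > 0" using v0 by simp
      then have "g (0 - v) = -\<infinity>" using neg by simp
      then show ?thesis using gF[of 0] by (auto simp: piop_ereal split: if_splits)
    qed
    have SnM: "S \<noteq> -\<infinity>"
    proof
      assume "S = -\<infinity>"
      then have "F 0 = 1 - \<gamma>" using d0 by (simp add: F_def A_def)
      then show False using F0 ga1 by simp
    qed
    define s where "s = real_of_ereal S"
    have A0: "A 0 = 1 - \<gamma> - \<mu> * max s 0" using SnM by (simp add: A_def s_def)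
    have spos: "s > 0"
    proof (rule ccontr)
      assume "\<not> s > 0"
      then have "A 0 = 1 - \<gamma>" using A0 by (simp add: max_def)
      then show False using F0 d0 ga1 by (simp add: F_def)
    qed
    have mus: "1 - \<gamma> - \<mu> * s \<le> 0" using F0 d0 A0 spos by (simp add: F_def max_def)
    define e where "e y = F (y + v) - y" for y
    have elip: "\<bar>e y - e y'\<bar> \<le> (2 + \<mu>) * \<bar>y - y'\<bar>" for y y'
      using Flip[of "y + v" "y' + v"] by (simp add: e_def abs_if algebra_simps split: if_splits)
    have econt: "continuous_on {L..0} e"
    proof -
      have "(2 + \<mu>)-lipschitz_on {L..0} e"
        by (rule lipschitz_onI) (use elip mu0 in \<open>auto simp: dist_real_def\<close>)
      then show ?thesis by (rule lipschitz_on_continuous_on)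
    qed
    obtain ys where ys: "ys \<in> {L..0}" "\<forall>y\<in>{L..0}. e y \<le> e ys"
      using continuous_attains_sup[OF compact_Icc _ econt] Lneg by auto
    have SUPle: "(SUP y'\<in>{z..0}. g y' - ereal y') \<le> ereal (e ys)" for z
    proof (rule SUP_least)
      fix y' assume "y' \<in> {z..0}"
      show "g y' - ereal y' \<le> ereal (e ys)"
      proof (cases "g y' = -\<infinity>")
        case True then show ?thesis by simp
      next
        case False
        then have "y' \<in> {L..0}" using suppchar by auto
        then have "e y' \<le> e ys" using ys by auto
        then show ?thesis using greal[OF False] by (simp add: e_def)
      qed
    qed
    have dle: "d (y + v) \<le> e ys + (y + v)" if "y \<le> 0" for y
    proof -
      have "Dg g (y + v) = (SUP y'\<in>{y + v..0}. g y' - ereal y') + ereal (y + v)"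
        using monog.Dg_nonpos[OF mg, of "y + v"] that v0 by simp
      also have "\<dots> \<le> ereal (e ys) + ereal (y + v)" using SUPle by (intro add_right_mono) auto
      finally show ?thesis by (simp add: Dd)
    qed
    have ys0: "ys \<le> 0" "L \<le> ys" using ys by auto
    have "A (ys + v) = 1 - \<gamma> - \<mu> * (s - (ys + v))"
      using SnM spos ys0 v0 by (simp add: A_def s_def max_def)
    then have "e ys \<le> 1 - \<gamma> - \<mu> * (s - (ys + v)) + e ys + v"
      using dle[OF ys0(1)] by (simp add: e_def F_def)
    then have "0 \<le> (1 - \<gamma> - \<mu> * s) + \<mu> * ys + (1 + \<mu>) * v" by (simp add: algebra_simps)
    moreover have "(1 + \<mu>) * v \<le> 0" using v0 mu0 by (simp add: mult_nonneg_nonpos)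
    ultimately have "0 \<le> \<mu> * ys" using mus by linarith
    then have "ys = 0" using ys0 mu0 by (simp add: zero_le_mult_iff)
    then have "e L \<le> e 0" using ys Lneg by auto
    moreover have "e 0 = 0" using Fv by (simp add: e_def)
    moreover have "e L > 0" using greal[OF Lin] Lneg by (simp add: e_def)
    ultimately show False by simp
  qed
  define S' where "S' = (if S = -\<infinity> then L - v - 1 else real_of_ereal S)"
  have iden: "g (x - v) = piop (ereal (1 - \<gamma> - \<mu> * max (S' - x) 0) + Dg g x)" for x
  proof (cases "S = -\<infinity>")
    case False
    then have "1 - \<gamma> - \<mu> * max (S' - x) 0 = A x" by (simp add: S'_def A_def)
    then show ?thesis using gF[of x] by (simp add: Dd F_def)
  next
    case True
    show ?thesis
    proof (cases "S' \<le> x")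
      case True
      then have "1 - \<gamma> - \<mu> * max (S' - x) 0 = A x" using \<open>S = -\<infinity>\<close> by (simp add: A_def max_def)
      then show ?thesis using gF[of x] by (simp add: Dd F_def)
    next
      case False
      then have "x - v < L" using vpos \<open>S = -\<infinity>\<close> by (simp add: S'_def)
      then have "\<not> (L \<le> x - v \<and> x - v \<le> 0)" by simp
      then have gx: "g (x - v) = -\<infinity>" using suppchar[of "x - v"] by blast
      then have "F x < 0" using gF[of x] by (auto simp: piop_ereal split: if_splits)
      moreover have "1 - \<gamma> - \<mu> * max (S' - x) 0 \<le> 1 - \<gamma>" using mu0 by simp
      ultimately have "1 - \<gamma> - \<mu> * max (S' - x) 0 + d x < 0" using \<open>S = -\<infinity>\<close> by (simp add: F_def A_def)
      then show ?thesis using gx by (simp add: Dd piop_ereal)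
    qed
  qed
  have sf: "sfun \<gamma> \<mu> g = ereal S' \<or> (\<forall>y. g y \<noteq> -\<infinity> \<longrightarrow> S' - v < y)"
  proof (cases "S = -\<infinity>")
    case True
    then have "\<forall>y. g y \<noteq> -\<infinity> \<longrightarrow> S' - v < y" using suppchar vpos by (auto simp: S'_def)
    then show ?thesis by simp
  next
    case False
    then show ?thesis using Snotinf by (simp add: S'_def S_def ereal_real_cases)
  qed
  show ?thesis using vpos mg Lneg suppchar iden sf by blast
qed

end

lemma sup_thresh:
  assumes S: "Sup (ereal ` T) = ereal S'" and y0: "y0 < S'"
    and T: "\<And>x. x \<ge> y0 \<Longrightarrow> (x \<in> T \<longleftrightarrow> x \<le> x0)"
  shows "S' = x0"
proof (rule ccontr)
  assume ne: "S' \<noteq> x0"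
  show False
  proof (cases "x0 > S'")
    case True
    define x where "x = (S' + x0) / 2"
    have "x \<in> T" using T[of x] True y0 by (simp add: x_def)
    then have "ereal x \<le> Sup (ereal ` T)" by (rule SUP_upper)
    then have "ereal x \<le> ereal S'" using S by simp
    then show False using True by (simp add: x_def)
  next
    case False
    then have lt: "x0 < S'" using ne by simp
    have "Sup (ereal ` T) \<le> ereal (max y0 x0)"
    proof (rule SUP_least)
      fix x assume "x \<in> T"
      then have "x \<le> max y0 x0" using T[of x] by (cases "x \<ge> y0") auto
      then show "ereal x \<le> ereal (max y0 x0)" by (simp add: le_max_iff_disj)
    qed
    then show False using S lt y0 by (simp add: le_max_iff_disj)
  qed
qed

lemma Pc_mono: "c \<ge> 0 \<Longrightarrow> x \<le> x' \<Longrightarrow> Pc c g x' \<le> Pc c g x"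
  unfolding Pc_def
proof (rule SUP_mono)
  fix y assume "c \<ge> 0" "x \<le> x'"
  then have "c * max (x - y) 0 \<le> c * max (x' - y) 0" by (intro mult_left_mono) auto
  then have "g y - ereal (c * max (x' - y) 0) \<le> g y - ereal (c * max (x - y) 0)"
    by (cases "g y") auto
  then show "\<exists>m\<in>UNIV. g y - ereal (c * max (x' - y) 0) \<le> g m - ereal (c * max (x - m) 0)" by blast
qed

context Wid
begin

lemma val: "1 \<le> j \<Longrightarrow> j \<le> K + 2 \<Longrightarrow> W (b j) = (v - m) + v * ((real j - 1) - \<mu> * real j * (real j - 1) / 2)"
proof -
  assume j: "1 \<le> j" "j \<le> K + 2"
  have W: "W (b j) = l j (b j)" using j by (intro W_piece) (auto intro: b_mono)
  have "l j (b j) = (v - m) + v * ((real j - 1) - \<mu> * real j * (real j - 1) / 2)" using j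
  proof (induction j)
    case 0 then show ?case by simp
  next
    case (Suc i)
    show ?case
    proof (cases "i = 0")
      case True then show ?thesis by (simp add: bp_def)
    next
      case False
      then have IH: "l i (b i) = (v - m) + v * ((real i - 1) - \<mu> * real i * (real i - 1) / 2)"
        using Suc by simp
      have si: "s i = real i * \<mu> - 1" using Suc.prems by (intro s_lin) simp
      have e1: "l (Suc i) (b (Suc i)) = l i (b (Suc i))" by simp
      have e2: "l i (b (Suc i)) = l i (b i) + s i * (b (Suc i) - b i)" by (rule lin_affine)
      have e3: "b (Suc i) - b i = - v" by (simp add: b_Suc)
      have "l (Suc i) (b (Suc i)) = (v - m) + v * ((real i - 1) - \<mu> * real i * (real i - 1) / 2) - (real i * \<mu> - 1) * v"
        using e1 e2 e3 IH si by simp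
      then show ?thesis by (simp add: field_simps)
    qed
  qed
  then show ?thesis using W by simp
qed

lemma Pc_sg:
  assumes c: "c \<ge> 0" and sg: "\<And>y. W y \<le> W y0 - c * (y - y0)" and w0: "W y0 \<ge> 0" and x: "x \<ge> y0"
  shows "Pc c (epi W) x = ereal (W y0 - c * (x - y0))"
proof (rule antisym)
  show "Pc c (epi W) x \<le> ereal (W y0 - c * (x - y0))"
    unfolding Pc_def
  proof (rule SUP_least)
    fix y
    show "epi W y - ereal (c * max (x - y) 0) \<le> ereal (W y0 - c * (x - y0))"
    proof (cases "W y \<ge> 0")
      case False then show ?thesis by (simp add: epi_def piop_ereal)
    next
      case True
      have "W y - c * max (x - y) 0 \<le> W y0 - c * (x - y0)"
      proof (cases "x \<ge> y")
        case True
        then have "c * max (x - y) 0 = c * (x - y)" by simp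
        then show ?thesis using sg[of y] by (simp add: algebra_simps)
      next
        case False
        have "c * (x - y0) \<le> c * (y - y0)" using False c by (intro mult_left_mono) auto
        then show ?thesis using sg[of y] False by simp
      qed
      then show ?thesis using True by (simp add: epi_def piop_ereal)
    qed
  qed
  have "epi W y0 - ereal (c * max (x - y0) 0) = ereal (W y0 - c * (x - y0))"
    using w0 x by (simp add: epi_def piop_ereal)
  moreover have "epi W y0 - ereal (c * max (x - y0) 0) \<le> Pc c (epi W) x"
    unfolding Pc_def by (rule SUP_upper) simp
  ultimately show "ereal (W y0 - c * (x - y0)) \<le> Pc c (epi W) x" by simp
qed

lemma Pc_gt1:
  assumes x: "x \<ge> b 1"
  shows "Pc 1 (epi W) x = ereal (- x)"
proof -
  define y0 where "y0 = min x 0"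
  have y0: "b 1 \<le> y0" "y0 \<le> 0" "y0 \<le> x" using x b1 by (auto simp: y0_def)
  have Wy0: "W y0 = - y0" using W_piece0 y0 by simp
  have sg: "W y \<le> W y0 - 1 * (y - y0)" for y using W_le[of 0 y] Wy0 by simp
  have "Pc 1 (epi W) x = ereal (W y0 - 1 * (x - y0))"
    by (rule Pc_sg[OF _ sg]) (use y0 Wy0 in auto)
  then show ?thesis using Wy0 by simp
qed

lemma Pc_lt1:
  assumes k: "1 \<le> k" "k \<le> K" "real k * \<mu> \<le> 1" "1 \<le> (real k + 1) * \<mu>"
    and w: "W (b k) \<ge> 0" and x: "x \<ge> b k"
  shows "Pc \<mu> (epi W) x = ereal (W (b k) - \<mu> * (x - b k))"
proof -
  have W1: "W (b k) = l (k - 1) (b k)"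
  proof (rule W_piece)
    show "k - 1 \<le> K + 2" using k(2) by arith
    show "0 < k - 1 \<Longrightarrow> b k \<le> b (k - 1)" by (rule b_mono) simp
    show "k - 1 < K + 2 \<Longrightarrow> b (Suc (k - 1)) \<le> b k" using k by simp
  qed
  have W2: "W (b k) = l k (b k)"
    by (rule W_piece) (use k in \<open>auto intro: b_mono\<close>)
  have sk1: "s (k - 1) \<le> - \<mu>"
  proof -
    have "s (k - 1) = real (k - 1) * \<mu> - 1" using k by (intro s_lin) simp
    also have "real (k - 1) = real k - 1" using k by (simp add: of_nat_diff)
    finally show ?thesis using k by (simp add: algebra_simps)
  qed
  have sk: "s k \<ge> - \<mu>" using k s_lin[of k] by (simp add: algebra_simps)
  have sg: "W y \<le> W (b k) - \<mu> * (y - b k)" for y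
  proof (cases "y \<ge> b k")
    case True
    have "W y \<le> l (k - 1) y" using k(2) by (intro W_le) arith
    also have "\<dots> = W (b k) + s (k - 1) * (y - b k)" using lin_affine[of "k - 1" y "b k"] W1 by simp
    also have "s (k - 1) * (y - b k) \<le> (- \<mu>) * (y - b k)" using sk1 True by (intro mult_right_mono) auto
    finally show ?thesis by simp
  next
    case False
    have "W y \<le> l k y" using k by (intro W_le) simp
    also have "\<dots> = W (b k) + s k * (y - b k)" using lin_affine[of k y "b k"] W2 by simp
    also have "s k * (y - b k) \<le> (- \<mu>) * (y - b k)" using sk False by (intro mult_right_mono_neg) auto
    finally show ?thesis by simp
  qed
  show ?thesis by (rule Pc_sg[OF _ sg w x]) (use mu in simp)
qed

end

lemma piop_ge_gamma: "0 < g \<Longrightarrow> (ereal g \<le> piop (ereal r)) = (g \<le> r)"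
  by (auto simp: piop_ereal)

lemma piop_zero: "piop (ereal r) = 0 \<Longrightarrow> r = 0"
  by (auto simp: piop_ereal zero_ereal_def split: if_splits)

lemma alg_a:
  fixes k \<mu> \<gamma> v S :: real
  assumes h1: "1 - \<gamma> - \<mu> * (S - v) = v"
    and h2: "\<mu> * (S - (v - k * v)) = 1 - 2 * \<gamma> + v * ((k - 1) - \<mu> * k * (k - 1) / 2)"
  shows "v * (k * (2 - (k + 1) * \<mu>)) = 2 * \<gamma>"
proof -
  have "2 * (\<mu> * (S - (v - k * v))) = 2 * (1 - 2 * \<gamma> + v * ((k - 1) - \<mu> * k * (k - 1) / 2))"
    using h2 by simp
  also have "\<dots> = 2 * (1 - 2 * \<gamma>) + v * (2 * (k - 1) - \<mu> * k * (k - 1))" by (simp add: field_simps)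
  finally have h2': "2 * (\<mu> * (S - (v - k * v))) = 2 * (1 - 2 * \<gamma>) + v * (2 * (k - 1) - \<mu> * k * (k - 1))" .
  have id: "v * (k * (2 - (k + 1) * \<mu>)) - 2 * \<gamma> = - (2 * (1 - \<gamma> - \<mu> * (S - v) - v) +
      (2 * (\<mu> * (S - (v - k * v))) - (2 * (1 - 2 * \<gamma>) + v * (2 * (k - 1) - \<mu> * k * (k - 1)))))"
    by (simp add: algebra_simps)
  show ?thesis using id h1 h2' by simp
qed

lemma alg_b:
  fixes k \<mu> \<gamma> v S :: real
  assumes h1: "v = 1 - \<gamma>"
    and h2: "\<mu> * (S - (S - k * v)) = 1 - 2 * \<gamma> + ((v - S) + v * ((k - 1) - \<mu> * k * (k - 1) / 2))"
  shows "v - S = 1 - (1 - \<gamma>) * (k * (1 - (k + 1) / 2 * \<mu>) + 1)"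
proof -
  have "2 * (\<mu> * (S - (S - k * v))) = 2 * (1 - 2 * \<gamma> + ((v - S) + v * ((k - 1) - \<mu> * k * (k - 1) / 2)))"
    using h2 by simp
  also have "\<dots> = 2 * (1 - 2 * \<gamma>) + (2 * (v - S) + v * (2 * (k - 1) - \<mu> * k * (k - 1)))" by (simp add: field_simps)
  finally have h2': "2 * (\<mu> * (S - (S - k * v))) = 2 * (1 - 2 * \<gamma>) + (2 * (v - S) + v * (2 * (k - 1) - \<mu> * k * (k - 1)))" .
  have g: "2 * (v - S) = 2 - (1 - \<gamma>) * (2 * k + 2 - (k + 1) * k * \<mu>)"
  proof -
    have id: "2 * (v - S) - (2 - (1 - \<gamma>) * (2 * k + 2 - (k + 1) * k * \<mu>)) =
      (v - (1 - \<gamma>)) * (2 - 2 * k + \<mu> * k + \<mu> * k * k) -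
      (2 * (\<mu> * (S - (S - k * v))) - (2 * (1 - 2 * \<gamma>) + (2 * (v - S) + v * (2 * (k - 1) - \<mu> * k * (k - 1)))))"
      by (simp add: algebra_simps)
    show ?thesis using id h1 h2' by simp
  qed
  have X: "2 * (1 - (1 - \<gamma>) * (k * (1 - (k + 1) / 2 * \<mu>) + 1)) = 2 - (1 - \<gamma>) * (2 * k + 2 - (k + 1) * k * \<mu>)"
    by (simp add: field_simps)
  have "2 * (v - S) = 2 * (1 - (1 - \<gamma>) * (k * (1 - (k + 1) / 2 * \<mu>) + 1))" using trans[OF g X[symmetric]] .
  then show ?thesis by simp
qed

context wpar
begin

definition kN :: nat where "kN = nat \<lfloor>1 / \<mu>\<rfloor>"
definition KN :: nat where "KN = nat \<lfloor>2 / \<mu>\<rfloor>"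

lemma kN_real: "real kN = kk \<mu>"
proof -
  have "\<lfloor>1 / \<mu>\<rfloor> \<ge> 0" using mu0 by simp
  then show ?thesis by (simp add: kN_def kk_def)
qed

lemma KN_real: "real KN = KK \<mu>"
proof -
  have "\<lfloor>2 / \<mu>\<rfloor> \<ge> 0" using mu0 by simp
  then show ?thesis by (simp add: KN_def KK_def)
qed

lemma kN_bounds: "real kN * \<mu> \<le> 1" "1 < (real kN + 1) * \<mu>"
proof -
  have f: "\<lfloor>1 / \<mu>\<rfloor> \<ge> 0" using mu0 by simp
  have a: "real kN \<le> 1 / \<mu>" using f by (simp add: kN_def)
  have b: "1 / \<mu> < real kN + 1" using f by (simp add: kN_def)
  show "real kN * \<mu> \<le> 1" using a mu0 by (simp add: field_simps)
  show "1 < (real kN + 1) * \<mu>" using b mu0 by (simp add: field_simps)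
qed

lemma KN_bounds: "real KN * \<mu> \<le> 2" "2 < (real KN + 1) * \<mu>"
proof -
  have f: "\<lfloor>2 / \<mu>\<rfloor> \<ge> 0" using mu0 by simp
  have a: "real KN \<le> 2 / \<mu>" using f by (simp add: KN_def)
  have b: "2 / \<mu> < real KN + 1" using f by (simp add: KN_def)
  show "real KN * \<mu> \<le> 2" using a mu0 by (simp add: field_simps)
  show "2 < (real KN + 1) * \<mu>" using b mu0 by (simp add: field_simps)
qed

lemma kN_le_KN: "kN \<le> KN"
proof -
  have "\<lfloor>1 / \<mu>\<rfloor> \<le> \<lfloor>2 / \<mu>\<rfloor>" using mu0 by (intro floor_mono) (simp add: divide_right_mono)
  then show ?thesis by (simp add: kN_def KN_def nat_mono)
qed

lemma kN_pos: "\<mu> < 1 \<Longrightarrow> kN \<ge> 1"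
proof -
  assume "\<mu> < 1"
  then have "1 \<le> 1 / \<mu>" using mu0 by (simp add: field_simps)
  then have "1 \<le> \<lfloor>1 / \<mu>\<rfloor>" by (simp add: le_floor_iff)
  then have "nat 1 \<le> nat \<lfloor>1 / \<mu>\<rfloor>" by (rule nat_mono)
  then show ?thesis by (simp add: kN_def)
qed

lemma kN_zero: "\<mu> > 1 \<Longrightarrow> kN = 0"
proof -
  assume "\<mu> > 1"
  then have "1 / \<mu> < 1" using mu0 by (simp add: field_simps)
  then have "\<lfloor>1 / \<mu>\<rfloor> < 1" by (simp add: floor_less_iff)
  then show ?thesis by (simp add: kN_def)
qed

definition Dk :: real where "Dk = real kN * (2 - (real kN + 1) * \<mu>)"

lemma Dk_pos: "\<mu> < 1 \<Longrightarrow> Dk > 0"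
proof -
  assume m1: "\<mu> < 1"
  have "(real kN + 1) * \<mu> = real kN * \<mu> + \<mu>" by (simp add: algebra_simps)
  then have "(real kN + 1) * \<mu> < 2" using kN_bounds m1 by linarith
  then show ?thesis using kN_pos[OF m1] by (simp add: Dk_def)
qed

lemma two_Dk: "2 + Dk = (real kN + 1) * (2 - real kN * \<mu>)"
  by (simp add: Dk_def algebra_simps)

lemma gc_eq: "gamma_c \<mu> = Dk / (2 + Dk)"
proof -
  have nz: "2 - real kN * \<mu> \<noteq> 0" using kN_bounds by simp
  have nz2: "real kN + 1 \<noteq> 0" by simp
  have "gamma_c \<mu> = real kN / (real kN + 1) * (1 - \<mu> / (2 - real kN * \<mu>))"
    by (simp add: gamma_c_def kN_real)
  also have "\<dots> = real kN * (2 - real kN * \<mu> - \<mu>) / ((real kN + 1) * (2 - real kN * \<mu>))"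
    using nz nz2 by (simp add: field_simps)
  also have "\<dots> = Dk / (2 + Dk)" by (simp add: two_Dk Dk_def algebra_simps)
  finally show ?thesis .
qed

lemma gc_zero: "\<mu> > 1 \<Longrightarrow> gamma_c \<mu> = 0"
  using kN_zero by (simp add: gamma_c_def kN_real[symmetric])

lemma two_Dk_pos: "2 + Dk > 0"
proof -
  have "2 - real kN * \<mu> > 0" using kN_bounds by simp
  then show ?thesis unfolding two_Dk by simp
qed

lemma gc_le_iff: "\<mu> < 1 \<Longrightarrow> (\<gamma> \<le> gamma_c \<mu>) = (2 * \<gamma> / Dk \<le> 1 - \<gamma>)"
proof -
  assume m1: "\<mu> < 1"
  have D: "Dk > 0" using Dk_pos[OF m1] .
  have "(\<gamma> \<le> Dk / (2 + Dk)) = (\<gamma> * (2 + Dk) \<le> Dk)" using two_Dk_pos by (simp add: pos_le_divide_eq)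
  also have "\<dots> = (2 * \<gamma> \<le> (1 - \<gamma>) * Dk)" by (simp add: algebra_simps)
  also have "\<dots> = (2 * \<gamma> / Dk \<le> 1 - \<gamma>)" using D by (simp add: pos_divide_le_eq)
  finally show ?thesis by (simp add: gc_eq)
qed

lemma formula_ii: "1 - (1 - \<gamma>) * (kk \<mu> * (1 - (kk \<mu> + 1) / 2 * \<mu>) + 1) = 1 - (1 - \<gamma>) * (2 + Dk) / 2"
  by (simp add: Dk_def kN_real field_simps)

lemma gc_gt_iff: "(\<gamma> > gamma_c \<mu>) = (1 - (1 - \<gamma>) * (2 + Dk) / 2 > 0)"
proof -
  have "(\<gamma> > Dk / (2 + Dk)) = (\<gamma> * (2 + Dk) > Dk)" using two_Dk_pos by (simp add: divide_less_eq)
  also have "\<dots> = (1 - (1 - \<gamma>) * (2 + Dk) / 2 > 0)" by (simp add: algebra_simps)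
  finally show ?thesis by (simp add: gc_eq)
qed

definition vS :: real where
  "vS = (if \<gamma> \<le> gamma_c \<mu> then 2 * \<gamma> / (kk \<mu> * (2 - (kk \<mu> + 1) * \<mu>)) else 1 - \<gamma>)"
definition SS :: real where
  "SS = (if \<gamma> \<le> gamma_c \<mu> then vS + (1 - \<gamma> - vS) / \<mu>
         else vS - (1 - (1 - \<gamma>) * (kk \<mu> * (1 - (kk \<mu> + 1) / 2 * \<mu>) + 1)))"
definition mS :: real where "mS = min SS vS"
definition Wst :: "real \<Rightarrow> real" where "Wst = Wf \<mu> KN mS vS"

lemma vS_Dk: "\<gamma> \<le> gamma_c \<mu> \<Longrightarrow> vS = 2 * \<gamma> / Dk"
  by (simp add: vS_def Dk_def kN_real)

lemma case_i_mu: "\<gamma> \<le> gamma_c \<mu> \<Longrightarrow> \<mu> < 1"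
proof (rule ccontr)
  assume "\<gamma> \<le> gamma_c \<mu>" "\<not> \<mu> < 1"
  then have "\<mu> > 1" using mu1 by simp
  then show False using gc_zero \<open>\<gamma> \<le> gamma_c \<mu>\<close> ga0 by simp
qed

end

context wpar
begin

lemma T_member:
  assumes P: "Pc c g x = ereal p"
  shows "(ereal \<gamma> \<le> pfun \<gamma> \<mu> g x) = (x \<in> {x. ereal \<gamma> \<le> pfun \<gamma> \<mu> g x})"
  by simp

lemma pfun_val:
  assumes P: "Pc (min 1 \<mu>) g x = ereal p"
  shows "(ereal \<gamma> \<le> pfun \<gamma> \<mu> g x) = (2 * \<gamma> - 1 \<le> p)"
proof -
  have "pfun \<gamma> \<mu> g x = piop (ereal (1 - \<gamma> + p))" by (simp add: pfun_eq P)
  then show ?thesis using piop_ge_gamma[OF ga0, of "1 - \<gamma> + p"] by auto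
qed

lemma thresh_iff:
  assumes c: "c > 0"
  shows "(2 * \<gamma> - 1 \<le> w - c * (x - y0)) = (x \<le> y0 + (1 - 2 * \<gamma> + w) / c)"
proof -
  have "(2 * \<gamma> - 1 \<le> w - c * (x - y0)) = (c * (x - y0) \<le> 1 - 2 * \<gamma> + w)" by linarith
  also have "\<dots> = (x - y0 \<le> (1 - 2 * \<gamma> + w) / c)" using c by (simp add: pos_le_divide_eq mult.commute)
  finally show ?thesis by linarith
qed

lemma wave_is_W:
  assumes adm: "admissible_wave g" and st: "step \<gamma> \<mu> g = shift v g"
    and neg: "\<And>y. y > 0 \<Longrightarrow> g y = -\<infinity>" and g0ne: "g 0 \<noteq> -\<infinity>" and pos: "\<exists>y. g y > 0"
  shows "g = epi Wst \<and> v = vS"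
proof -
  obtain L S' where vpos: "v > 0" and mg: "monog g" and Lneg: "L < 0"
    and supp: "\<And>y. g y \<noteq> -\<infinity> \<longleftrightarrow> L \<le> y \<and> y \<le> 0"
    and iden: "\<And>x. g (x - v) = piop (ereal (1 - \<gamma> - \<mu> * max (S' - x) 0) + Dg g x)"
    and sf: "sfun \<gamma> \<mu> g = ereal S' \<or> (\<forall>y. g y \<noteq> -\<infinity> \<longrightarrow> S' - v < y)"
    using GL[OF adm st neg g0ne pos] by blast
  have R1: "1 - \<gamma> - \<mu> * max (S' - v) 0 = v"
  proof -
    have "g (v - v) = piop (ereal (1 - \<gamma> - \<mu> * max (S' - v) 0) + Dg g v)" by (rule iden)
    moreover have "Dg g v = ereal (- v)" using monog.Dg_pos[OF mg, of v] vpos by simp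
    moreover have "g 0 = 0" by (rule monog.g0[OF mg])
    ultimately have "piop (ereal (1 - \<gamma> - \<mu> * max (S' - v) 0 - v)) = 0" by simp
    then show ?thesis using piop_zero by fastforce
  qed
  have Cc: "S' \<le> v \<or> \<mu> < 1"
  proof (rule ccontr)
    assume "\<not> (S' \<le> v \<or> \<mu> < 1)"
    then have Sv: "S' > v" and m1: "\<mu> > 1" using mu1 by auto
    define x where "x = (v + S') / 2"
    have x: "v < x" "x < S'" using Sv by (auto simp: x_def)
    have "g (x - v) = -\<infinity>" using neg x by simp
    moreover have "Dg g x = ereal (- x)" using monog.Dg_pos[OF mg, of x] x vpos by simp
    ultimately have "piop (ereal (1 - \<gamma> - \<mu> * max (S' - x) 0 - x)) = -\<infinity>" using iden[of x] by simp
    then have neg1: "1 - \<gamma> - \<mu> * (S' - x) - x < 0" using x by (auto simp: piop_ereal split: if_splits)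
    have "1 - \<gamma> - \<mu> * (S' - v) - v = 0" using R1 Sv by (simp add: max_def)
    then have "1 - \<gamma> - \<mu> * (S' - x) - x = (\<mu> - 1) * (x - v)" by (simp add: algebra_simps)
    moreover have "(\<mu> - 1) * (x - v) > 0" using m1 x by simp
    ultimately show False using neg1 by simp
  qed
  define m where "m = min S' v"
  have mv: "m \<le> v" by (simp add: m_def)
  interpret W: Wid \<mu> KN m v \<gamma> S'
    using mu0 vpos KN_bounds mv ga0 ga1 R1 Cc by unfold_locales (auto simp: m_def)
  define Wm where "Wm = Wf \<mu> KN m v"
  have gW: "g = epi Wm"
  proof -
    have "g = epi (Wf \<mu> KN m v)"
    proof (rule uniq_rec[OF mg W.monog_W vpos])
      fix x show "g (x - v) = piop (ereal (W.aa x) + Dg g x)" using iden[of x] by (simp add: W.aa_def)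
    next
      fix x show "epi (Wf \<mu> KN m v) (x - v) = piop (ereal (W.aa x) + Dg (epi (Wf \<mu> KN m v)) x)"
        by (rule W.claimC)
    qed
    then show ?thesis by (simp add: Wm_def)
  qed
  define T where "T = {x. ereal \<gamma> \<le> pfun \<gamma> \<mu> g x}"
  have ST: "Sup (ereal ` T) = ereal S'"
  proof -
    have "\<not> (\<forall>y. g y \<noteq> -\<infinity> \<longrightarrow> S' - v < y)"
    proof
      assume h: "\<forall>y. g y \<noteq> -\<infinity> \<longrightarrow> S' - v < y"
      define y1 where "y1 = min 0 (S' - v)"
      have "Wm y1 \<ge> 0"
      proof (cases "S' \<le> v")
        case True
        then have "m = S'" "y1 = bp m v 1" by (auto simp: m_def y1_def bp_def)
        then show ?thesis using W.W_piece0[of y1] True by (simp add: Wm_def bp_def)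
      next
        case False
        then have "y1 = 0" by (simp add: y1_def)
        then show ?thesis using W.W0 by (simp add: Wm_def)
      qed
      then have "g y1 \<noteq> -\<infinity>" using gW by (simp add: epi_def piop_ereal)
      then have "S' - v < y1" using h by blast
      then show False by (simp add: y1_def)
    qed
    then have "sfun \<gamma> \<mu> g = ereal S'" using sf by blast
    then show ?thesis by (simp add: sfun_def T_def)
  qed
  show ?thesis
  proof (cases "\<mu> > 1")
    case m1: True
    then have Sv: "S' \<le> v" using Cc by simp
    then have m: "m = S'" by (simp add: m_def)
    have v1: "v = 1 - \<gamma>" using R1 Sv by (simp add: max_def)
    have c1: "min 1 \<mu> = 1" using m1 by simp
    have Tm: "x \<in> T \<longleftrightarrow> x \<le> 1 - 2 * \<gamma>" if x: "x \<ge> S' - v" for x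
    proof -
      have "x \<ge> bp m v 1" using x m by (simp add: bp_def)
      then have "Pc 1 (epi Wm) x = ereal (- x)" using W.Pc_gt1 by (simp add: Wm_def)
      then have "Pc (min 1 \<mu>) g x = ereal (- x)" using gW c1 by simp
      then have "x \<in> T \<longleftrightarrow> 2 * \<gamma> - 1 \<le> - x" using pfun_val by (simp add: T_def)
      then show ?thesis by linarith
    qed
    have S'v: "S' = 1 - 2 * \<gamma>" by (rule sup_thresh[OF ST _ Tm]) (use vpos in auto)
    have gc: "\<not> \<gamma> \<le> gamma_c \<mu>" using gc_zero[OF m1] ga0 by simp
    have kk0: "kk \<mu> = 0" using kN_zero[OF m1] kN_real by simp
    have "vS = v" using gc v1 by (simp add: vS_def)
    moreover have "SS = S'" using gc v1 S'v kk0 by (simp add: SS_def vS_def)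
    ultimately have "Wst = Wm" using m by (simp add: Wst_def mS_def Wm_def m_def)
    then show ?thesis using gW \<open>vS = v\<close> by simp
  next
    case False
    then have m1: "\<mu> < 1" using mu1 by simp
    define k where "k = kN"
    have k: "1 \<le> k" "k \<le> KN" "real k * \<mu> \<le> 1" "1 \<le> (real k + 1) * \<mu>"
      using kN_pos[OF m1] kN_le_KN kN_bounds by (auto simp: k_def)
    have c1: "min 1 \<mu> = \<mu>" using m1 by simp
    have kv: "real k * v > 0" using k vpos by simp
    have Pform: "Pc (min 1 \<mu>) g x = ereal (Wm (bp m v k) - \<mu> * (x - bp m v k))"
      if "x \<ge> bp m v k" "Wm (bp m v k) \<ge> 0" for x
      using W.Pc_lt1[OF k] that gW c1 by (simp add: Wm_def)
    have Tm: "x \<in> T \<longleftrightarrow> x \<le> bp m v k + (1 - 2 * \<gamma> + Wm (bp m v k)) / \<mu>"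
      if "x \<ge> bp m v k" "Wm (bp m v k) \<ge> 0" for x
    proof -
      have "x \<in> T \<longleftrightarrow> 2 * \<gamma> - 1 \<le> Wm (bp m v k) - \<mu> * (x - bp m v k)"
        using pfun_val Pform[OF that] by (simp add: T_def)
      then show ?thesis using thresh_iff[OF mu0] by simp
    qed
    have valk: "Wm (bp m v k) = (v - m) + v * ((real k - 1) - \<mu> * real k * (real k - 1) / 2)"
      using W.val[of k] k by (simp add: Wm_def)
    have nonneg: "v * ((real k - 1) - \<mu> * real k * (real k - 1) / 2) \<ge> 0"
    proof -
      have "(real k - 1) - \<mu> * real k * (real k - 1) / 2 = (real k - 1) * (1 - \<mu> * real k / 2)"
        by (simp add: algebra_simps)
      moreover have "real k - 1 \<ge> 0" "1 - \<mu> * real k / 2 \<ge> 0" using k by (auto simp: algebra_simps)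
      ultimately show ?thesis using vpos by simp
    qed
    show ?thesis
    proof (cases "S' \<ge> v")
      case True
      then have m: "m = v" by (simp add: m_def)
      have R1': "1 - \<gamma> - \<mu> * (S' - v) = v" using R1 True by (cases "S' = v") (simp_all add: max_def)
      have w0: "Wm (bp m v k) \<ge> 0" using valk nonneg m by simp
      have bk: "bp m v k < S'" using m kv True by (simp add: bp_def)
      have "S' = bp m v k + (1 - 2 * \<gamma> + Wm (bp m v k)) / \<mu>"
        by (rule sup_thresh[OF ST bk]) (use Tm w0 in auto)
      then have "\<mu> * (S' - bp m v k) = 1 - 2 * \<gamma> + Wm (bp m v k)" using mu0 by (simp add: field_simps)
      then have h2: "\<mu> * (S' - (v - real k * v)) = 1 - 2 * \<gamma> + v * ((real k - 1) - \<mu> * real k * (real k - 1) / 2)"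
        using valk m by (simp add: bp_def)
      have "v * Dk = 2 * \<gamma>" using alg_a[OF R1' h2] by (simp add: Dk_def k_def)
      then have vD: "v = 2 * \<gamma> / Dk" using Dk_pos[OF m1] by (simp add: field_simps)
      have "v \<le> 1 - \<gamma>" using R1' True mu0 by (smt (verit) mult_nonneg_nonneg)
      then have gc: "\<gamma> \<le> gamma_c \<mu>" using gc_le_iff[OF m1] vD by simp
      have "vS = v" using vS_Dk[OF gc] vD by simp
      moreover have "SS = S'"
      proof -
        have "SS = v + (1 - \<gamma> - v) / \<mu>" using gc \<open>vS = v\<close> by (simp add: SS_def)
        also have "(1 - \<gamma> - v) = \<mu> * (S' - v)" using R1' by simp
        finally show ?thesis using mu0 by simp
      qed
      ultimately have "Wst = Wm" using m by (simp add: Wst_def mS_def Wm_def m_def)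
      then show ?thesis using gW \<open>vS = v\<close> by simp
    next
      case False
      then have Sv: "S' < v" by simp
      then have m: "m = S'" by (simp add: m_def)
      have v1: "v = 1 - \<gamma>" using R1 Sv by (simp add: max_def)
      have w0: "Wm (bp m v k) \<ge> 0" using valk nonneg m Sv by simp
      have bk: "bp m v k < S'" using m kv by (simp add: bp_def)
      have "S' = bp m v k + (1 - 2 * \<gamma> + Wm (bp m v k)) / \<mu>"
        by (rule sup_thresh[OF ST bk]) (use Tm w0 in auto)
      then have "\<mu> * (S' - bp m v k) = 1 - 2 * \<gamma> + Wm (bp m v k)" using mu0 by (simp add: field_simps)
      then have h2: "\<mu> * (S' - (S' - real k * v)) = 1 - 2 * \<gamma> + ((v - S') + v * ((real k - 1) - \<mu> * real k * (real k - 1) / 2))"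
        using valk m by (simp add: bp_def)
      have form: "v - S' = 1 - (1 - \<gamma>) * (real k * (1 - (real k + 1) / 2 * \<mu>) + 1)"
        by (rule alg_b[OF v1 h2])
      then have form': "v - S' = 1 - (1 - \<gamma>) * (kk \<mu> * (1 - (kk \<mu> + 1) / 2 * \<mu>) + 1)"
        by (simp add: k_def kN_real)
      have "v - S' = 1 - (1 - \<gamma>) * (2 + Dk) / 2" using trans[OF form' formula_ii] .
      then have "1 - (1 - \<gamma>) * (2 + Dk) / 2 > 0" using Sv by linarith
      then have gc: "\<gamma> > gamma_c \<mu>" using gc_gt_iff by simp
      have "vS = v" using gc v1 by (simp add: vS_def)
      moreover have "SS = S'" using gc \<open>vS = v\<close> form' by (simp add: SS_def)
      ultimately have "Wst = Wm" using m by (simp add: Wst_def mS_def Wm_def m_def)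
      then show ?thesis using gW \<open>vS = v\<close> by simp
    qed
  qed
qed

end

lemma alg_a':
  fixes k \<mu> \<gamma> v S :: real
  assumes h1: "v * (k * (2 - (k + 1) * \<mu>)) = 2 * \<gamma>" and mu: "\<mu> \<noteq> 0"
    and h2: "S = v + (1 - \<gamma> - v) / \<mu>"
  shows "\<mu> * (S - (v - k * v)) = 1 - 2 * \<gamma> + v * ((k - 1) - \<mu> * k * (k - 1) / 2)"
proof -
  have mS: "\<mu> * S = \<mu> * v + (1 - \<gamma> - v)" using h2 mu by (simp add: field_simps)
  have "2 * (\<mu> * (S - (v - k * v))) = 2 * (1 - 2 * \<gamma> + v * ((k - 1) - \<mu> * k * (k - 1) / 2))"
  proof -
    have id: "2 * (\<mu> * (S - (v - k * v))) - 2 * (1 - 2 * \<gamma> + v * ((k - 1) - \<mu> * k * (k - 1) / 2))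
      = 2 * (\<mu> * S - (\<mu> * v + (1 - \<gamma> - v))) + (2 * \<gamma> - v * (k * (2 - (k + 1) * \<mu>)))"
      by (simp add: field_simps)
    show ?thesis using id mS h1 by simp
  qed
  then show ?thesis by simp
qed

lemma alg_b':
  fixes k \<mu> \<gamma> v S :: real
  assumes h1: "v = 1 - \<gamma>"
    and h2: "v - S = 1 - (1 - \<gamma>) * (k * (1 - (k + 1) / 2 * \<mu>) + 1)"
  shows "\<mu> * (S - (S - k * v)) = 1 - 2 * \<gamma> + ((v - S) + v * ((k - 1) - \<mu> * k * (k - 1) / 2))"
proof -
  have id: "2 * (\<mu> * (S - (S - k * v))) - 2 * (1 - 2 * \<gamma> + ((v - S) + v * ((k - 1) - \<mu> * k * (k - 1) / 2)))
    = 2 * ((v - S) - (1 - (1 - \<gamma>) * (k * (1 - (k + 1) / 2 * \<mu>) + 1))) * (-1)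
      + (v - (1 - \<gamma>)) * (\<mu> * k * k + \<mu> * k - 2 * k + 2) * (-1) * (-1)"
    by (simp add: field_simps)
  have "2 * (\<mu> * (S - (S - k * v))) - 2 * (1 - 2 * \<gamma> + ((v - S) + v * ((k - 1) - \<mu> * k * (k - 1) / 2))) = 0"
    using id h1 h2 by simp
  then show ?thesis by simp
qed

context wpar
begin

lemma vS_pos: "vS > 0"
proof (cases "\<gamma> \<le> gamma_c \<mu>")
  case True
  then show ?thesis using vS_Dk Dk_pos[OF case_i_mu[OF True]] ga0 by simp
next
  case False then show ?thesis using ga1 by (simp add: vS_def)
qed

lemma caseii_diff: "\<not> \<gamma> \<le> gamma_c \<mu> \<Longrightarrow> vS - SS = 1 - (1 - \<gamma>) * (2 + Dk) / 2 \<and> vS - SS > 0"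
proof -
  assume g: "\<not> \<gamma> \<le> gamma_c \<mu>"
  have "vS - SS = 1 - (1 - \<gamma>) * (kk \<mu> * (1 - (kk \<mu> + 1) / 2 * \<mu>) + 1)" using g by (simp add: SS_def)
  then have "vS - SS = 1 - (1 - \<gamma>) * (2 + Dk) / 2" using formula_ii by simp
  moreover have "1 - (1 - \<gamma>) * (2 + Dk) / 2 > 0" using gc_gt_iff g by simp
  ultimately show ?thesis by simp
qed

lemma R1_star: "1 - \<gamma> - \<mu> * max (SS - vS) 0 = vS"
proof (cases "\<gamma> \<le> gamma_c \<mu>")
  case True
  have m1: "\<mu> < 1" using case_i_mu[OF True] .
  have v1: "vS \<le> 1 - \<gamma>" using gc_le_iff[OF m1] True vS_Dk[OF True] by simp
  have "SS - vS = (1 - \<gamma> - vS) / \<mu>" using True by (simp add: SS_def)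
  moreover have "(1 - \<gamma> - vS) / \<mu> \<ge> 0" using v1 mu0 by simp
  ultimately show ?thesis using mu0 by (simp add: max_def)
next
  case False
  then have "SS < vS" using caseii_diff by simp
  then show ?thesis using False by (simp add: max_def vS_def)
qed

lemma caseI_facts: "\<gamma> \<le> gamma_c \<mu> \<Longrightarrow> \<mu> < 1 \<and> vS \<le> 1 - \<gamma> \<and> vS \<le> SS \<and> mS = vS"
proof -
  assume True: "\<gamma> \<le> gamma_c \<mu>"
  have m1: "\<mu> < 1" using case_i_mu[OF True] .
  have v1: "vS \<le> 1 - \<gamma>" using gc_le_iff[OF m1] True vS_Dk[OF True] by simp
  have "SS - vS = (1 - \<gamma> - vS) / \<mu>" using True by (simp add: SS_def)
  moreover have "(1 - \<gamma> - vS) / \<mu> \<ge> 0" using v1 mu0 by simp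
  ultimately have "vS \<le> SS" by simp
  then show ?thesis using m1 v1 by (simp add: mS_def)
qed

lemma C_star: "SS \<le> vS \<or> \<mu> < 1"
proof (cases "\<gamma> \<le> gamma_c \<mu>")
  case True then show ?thesis using case_i_mu by simp
next
  case False then show ?thesis using caseii_diff by simp
qed

lemma Wid_star: "Wid \<mu> KN mS vS \<gamma> SS"
  using mu0 vS_pos KN_bounds ga0 ga1 R1_star C_star by unfold_locales (auto simp: mS_def)

lemma Wst_def': "Wst = Wf \<mu> KN mS vS" by (simp add: Wst_def)

lemma sfun_star: "sfun \<gamma> \<mu> (epi Wst) = ereal SS"
proof -
  interpret W: Wid \<mu> KN mS vS \<gamma> SS by (rule Wid_star)
  define T where "T = {x. ereal \<gamma> \<le> pfun \<gamma> \<mu> (epi Wst) x}"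
  have key: "\<exists>y0. y0 < SS \<and> (\<forall>x. x \<ge> y0 \<longrightarrow> (x \<in> T \<longleftrightarrow> x \<le> SS))"
  proof (cases "\<mu> > 1")
    case m1: True
    have g: "\<not> \<gamma> \<le> gamma_c \<mu>" using gc_zero[OF m1] ga0 by simp
    have kk0: "kk \<mu> = 0" using kN_zero[OF m1] kN_real by simp
    have SS1: "SS = 1 - 2 * \<gamma>" "vS = 1 - \<gamma>" using g kk0 by (simp_all add: SS_def vS_def)
    have m: "mS = SS" using SS1 ga0 by (simp add: mS_def)
    have c1: "min 1 \<mu> = 1" using m1 by simp
    show ?thesis
    proof (intro exI conjI allI impI)
      show "SS - vS < SS" using vS_pos by simp
      fix x assume x: "SS - vS \<le> x"
      have "x \<ge> bp mS vS 1" using x m by (simp add: bp_def)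
      then have "Pc (min 1 \<mu>) (epi Wst) x = ereal (- x)" using W.Pc_gt1 c1 by (simp add: Wst_def)
      then have "x \<in> T \<longleftrightarrow> 2 * \<gamma> - 1 \<le> - x" using pfun_val by (simp add: T_def)
      then show "x \<in> T \<longleftrightarrow> x \<le> SS" using SS1 by linarith
    qed
  next
    case False
    then have m1: "\<mu> < 1" using mu1 by simp
    define k where "k = kN"
    have k: "1 \<le> k" "k \<le> KN" "real k * \<mu> \<le> 1" "1 \<le> (real k + 1) * \<mu>"
      using kN_pos[OF m1] kN_le_KN kN_bounds by (auto simp: k_def)
    have c1: "min 1 \<mu> = \<mu>" using m1 by simp
    have kv: "real k * vS > 0" using k vS_pos by simp
    have valk: "Wst (bp mS vS k) = (vS - mS) + vS * ((real k - 1) - \<mu> * real k * (real k - 1) / 2)"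
      using W.val[of k] k by (simp add: Wst_def)
    have nonneg: "vS * ((real k - 1) - \<mu> * real k * (real k - 1) / 2) \<ge> 0"
    proof -
      have "(real k - 1) - \<mu> * real k * (real k - 1) / 2 = (real k - 1) * (1 - \<mu> * real k / 2)"
        by (simp add: algebra_simps)
      moreover have "real k - 1 \<ge> 0" "1 - \<mu> * real k / 2 \<ge> 0" using k by (auto simp: algebra_simps)
      ultimately show ?thesis using vS_pos by simp
    qed
    have w0: "Wst (bp mS vS k) \<ge> 0" using valk nonneg by (simp add: mS_def)
    have eqn: "\<mu> * (SS - bp mS vS k) = 1 - 2 * \<gamma> + Wst (bp mS vS k)"
    proof (cases "\<gamma> \<le> gamma_c \<mu>")
      case True
      have vD: "vS * (real k * (2 - (real k + 1) * \<mu>)) = 2 * \<gamma>"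
        using vS_Dk[OF True] Dk_pos[OF m1] by (simp add: Dk_def k_def field_simps)
      have m: "mS = vS" using caseI_facts[OF True] by simp
      have "\<mu> * (SS - (vS - real k * vS)) = 1 - 2 * \<gamma> + vS * ((real k - 1) - \<mu> * real k * (real k - 1) / 2)"
        by (rule alg_a'[OF vD]) (use mu0 True in \<open>simp_all add: SS_def\<close>)
      then show ?thesis using valk m by (simp add: bp_def)
    next
      case False
      have d: "vS - SS = 1 - (1 - \<gamma>) * (real k * (1 - (real k + 1) / 2 * \<mu>) + 1)"
        using False by (simp add: SS_def k_def kN_real)
      have v1: "vS = 1 - \<gamma>" using False by (simp add: vS_def)
      have m: "mS = SS" using caseii_diff[OF False] by (simp add: mS_def)
      have "\<mu> * (SS - (SS - real k * vS)) = 1 - 2 * \<gamma> + ((vS - SS) + vS * ((real k - 1) - \<mu> * real k * (real k - 1) / 2))"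
        by (rule alg_b'[OF v1 d])
      then show ?thesis using valk m by (simp add: bp_def)
    qed
    have x0: "bp mS vS k + (1 - 2 * \<gamma> + Wst (bp mS vS k)) / \<mu> = SS"
      using eqn mu0 by (simp add: field_simps)
    show ?thesis
    proof (intro exI conjI allI impI)
      show "bp mS vS k < SS"
      proof -
        have "mS \<le> SS" by (simp add: mS_def)
        then show ?thesis using kv by (simp add: bp_def)
      qed
      fix x assume x: "bp mS vS k \<le> x"
      have "Pc (min 1 \<mu>) (epi Wst) x = ereal (Wst (bp mS vS k) - \<mu> * (x - bp mS vS k))"
        using W.Pc_lt1[OF k w0[unfolded Wst_def] x] c1 by (simp add: Wst_def)
      then have "x \<in> T \<longleftrightarrow> 2 * \<gamma> - 1 \<le> Wst (bp mS vS k) - \<mu> * (x - bp mS vS k)"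
        using pfun_val by (simp add: T_def)
      then show "x \<in> T \<longleftrightarrow> x \<le> SS" using thresh_iff[OF mu0] x0 by simp
    qed
  qed
  then obtain y0 where y0: "y0 < SS" "\<And>x. x \<ge> y0 \<Longrightarrow> (x \<in> T \<longleftrightarrow> x \<le> SS)" by blast
  have "Sup (ereal ` T) = ereal SS"
  proof (rule antisym)
    show "Sup (ereal ` T) \<le> ereal SS"
    proof (rule SUP_least)
      fix x assume "x \<in> T"
      then have "x \<le> SS" using y0 by (cases "x \<ge> y0") auto
      then show "ereal x \<le> ereal SS" by simp
    qed
    have "SS \<in> T" using y0 by simp
    then show "ereal SS \<le> Sup (ereal ` T)" by (rule SUP_upper)
  qed
  then show ?thesis by (simp add: sfun_def T_def)
qed

lemma step_star: "step \<gamma> \<mu> (epi Wst) = shift vS (epi Wst)"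
proof (rule ext)
  interpret W: Wid \<mu> KN mS vS \<gamma> SS by (rule Wid_star)
  fix x
  have "step \<gamma> \<mu> (epi Wst) x = piop (Phi \<gamma> \<mu> (ereal SS) (epi Wst) x)"
    by (simp add: step_def sfun_star)
  also have "\<dots> = piop (ereal (W.aa x) + Dg (epi Wst) x)"
    by (simp add: Phi_real W.aa_def)
  also have "\<dots> = epi Wst (x - vS)" using W.claimC[of x] by (simp add: Wst_def)
  finally show "step \<gamma> \<mu> (epi Wst) x = shift vS (epi Wst) x" by (simp add: shift_def)
qed

lemma tw_star: "traveling_wave \<gamma> \<mu> (epi Wst) vS"
  by (rule tw_of_step[OF step_star])

lemma W_support_bounded: "\<exists>B. \<forall>y. Wst y \<ge> 0 \<longrightarrow> - B \<le> y \<and> y \<le> 0"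
proof -
  interpret W: Wid \<mu> KN mS vS \<gamma> SS by (rule Wid_star)
  define c where "c = lin \<mu> KN mS vS (KN + 2) 0"
  have sN: "sig \<mu> KN (KN + 2) = 1 + \<mu>" by (simp add: sig_def)
  show ?thesis
  proof (intro exI allI impI)
    fix y assume y: "Wst y \<ge> 0"
    have "Wst y \<le> lin \<mu> KN mS vS (KN + 2) y" unfolding Wst_def by (rule W.W_le) simp
    also have "\<dots> = c + (1 + \<mu>) * y" using W.lin_affine[of "KN + 2" y 0] sN by (simp add: c_def)
    finally have a: "0 \<le> c + (1 + \<mu>) * y" using y by simp
    have "- c \<le> (1 + \<mu>) * y" using a by linarith
    then have "(- c) / (1 + \<mu>) \<le> ((1 + \<mu>) * y) / (1 + \<mu>)" using mu0 by (intro divide_right_mono) auto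
    then have "- c / (1 + \<mu>) \<le> y" using mu0 by simp
    moreover have "- (\<bar>c\<bar> / (1 + \<mu>)) \<le> - c / (1 + \<mu>)" using mu0 by (simp add: divide_right_mono)
    ultimately have "- (\<bar>c\<bar> / (1 + \<mu>)) \<le> y" by linarith
    moreover have "y \<le> 0" using y W.W_pos_neg[of y] by (force simp: Wst_def)
    ultimately show "- (\<bar>c\<bar> / (1 + \<mu>)) \<le> y \<and> y \<le> 0" by simp
  qed
qed

lemma adm_star: "admissible_wave (epi Wst)"
proof -
  interpret W: Wid \<mu> KN mS vS \<gamma> SS by (rule Wid_star)
  have supp: "support (epi Wst) = {y. 0 \<le> Wst y}"
    by (auto simp: support_def epi_def piop_ereal)
  have cl: "closed {y. 0 \<le> Wst y}"
    by (rule closed_Collect_le) (auto simp: Wst_def intro: W.W_cont continuous_on_const)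
  obtain B where B: "\<And>y. Wst y \<ge> 0 \<Longrightarrow> - B \<le> y \<and> y \<le> 0" using W_support_bounded by blast
  have bd: "bounded {y. 0 \<le> Wst y}"
    by (rule bounded_subset[OF bounded_closed_interval[of "-B" 0]]) (use B in auto)
  have cc: "concave_ext (epi Wst)"
    unfolding concave_ext_def
  proof (intro allI impI)
    fix x y t :: real assume t: "0 < t \<and> t < 1"
    show "ereal t * epi Wst x + ereal (1 - t) * epi Wst y \<le> epi Wst (t * x + (1 - t) * y)"
    proof (cases "Wst x \<ge> 0 \<and> Wst y \<ge> 0")
      case True
      have "t * Wst x + (1 - t) * Wst y \<le> Wst (t * x + (1 - t) * y)"
        using W.W_concave[of t x y] t by (simp add: Wst_def)
      moreover have "t * Wst x + (1 - t) * Wst y \<ge> 0" using True t by simp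
      ultimately show ?thesis using True by (simp add: epi_def piop_ereal)
    next
      case False
      have ninf: "ereal a * epi Wst z \<noteq> \<infinity>" if "0 < a" for a z
        using that by (cases "Wst z \<ge> 0") (auto simp: epi_def piop_ereal)
      have "ereal t * epi Wst x + ereal (1 - t) * epi Wst y = -\<infinity>"
      proof (cases "Wst x \<ge> 0")
        case True
        then have "Wst y < 0" using False by simp
        then have "ereal (1 - t) * epi Wst y = -\<infinity>" using t by (simp add: epi_def piop_ereal)
        then show ?thesis using ninf[of t x] t by (cases "ereal t * epi Wst x") auto
      next
        case F2: False
        then have "ereal t * epi Wst x = -\<infinity>" using t by (simp add: epi_def piop_ereal)
        then show ?thesis using ninf[of "1 - t" y] t by (cases "ereal (1 - t) * epi Wst y") auto
      qed
      then show ?thesis by (rule ord_eq_le_trans) simp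
    qed
  qed
  have "0 \<le> Wst 0" using W.W0 by (simp add: Wst_def)
  then show ?thesis unfolding admissible_wave_def supp
    using cl bd cc by (auto simp: compact_eq_bounded_closed epi_def piop_ereal)
qed

lemma pos_point: "\<exists>y1<0. Wst y1 > 0"
proof -
  interpret W: Wid \<mu> KN mS vS \<gamma> SS by (rule Wid_star)
  show ?thesis
  proof (cases "\<gamma> \<le> gamma_c \<mu>")
    case True
    have m1: "\<mu> < 1" using case_i_mu[OF True] .
    have m: "mS = vS" using caseI_facts[OF True] by simp
    have KN1: "1 \<le> KN" using kN_pos[OF m1] kN_le_KN by simp
    have "Wst (bp mS vS 2) = vS * (1 - \<mu>)"
      using W.val[of 2] KN1 m by (simp add: Wst_def)
    moreover have "bp mS vS 2 < 0" using m vS_pos by (simp add: bp_def)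
    ultimately show ?thesis using m1 vS_pos by (intro exI[of _ "bp mS vS 2"]) auto
  next
    case False
    have m: "mS = SS" "SS < vS" using caseii_diff[OF False] by (auto simp: mS_def)
    have "Wst (bp mS vS 1) = vS - SS" using W.W_piece0[of "bp mS vS 1"] m by (simp add: Wst_def bp_def)
    moreover have "bp mS vS 1 < 0" using m by (simp add: bp_def)
    ultimately show ?thesis using m by (intro exI[of _ "bp mS vS 1"]) auto
  qed
qed

lemma pos_near0: "\<exists>y1<0. \<forall>y. y1 \<le> y \<and> y < 0 \<longrightarrow> Wst y > 0"
proof -
  interpret W: Wid \<mu> KN mS vS \<gamma> SS by (rule Wid_star)
  obtain y1 where y1: "y1 < 0" "Wst y1 > 0" using pos_point by blast
  show ?thesis
  proof (intro exI conjI allI impI)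
    show "y1 < 0" by fact
    fix y assume y: "y1 \<le> y \<and> y < 0"
    define t where "t = y / y1"
    have t: "0 < t" "t \<le> 1" using y y1 by (auto simp: t_def field_simps)
    have "t * y1 + (1 - t) * 0 = y" using y1 by (simp add: t_def)
    then have "t * Wst y1 + (1 - t) * Wst 0 \<le> Wst y" using W.W_concave[of t y1 0] t by (simp add: Wst_def)
    moreover have "Wst 0 = 0" using W.W0 by (simp add: Wst_def)
    moreover have "t * Wst y1 > 0" using t y1 by simp
    ultimately show "Wst y > 0" by simp
  qed
qed

lemma norm_star: "Sup (ereal ` {x. epi Wst x > 0}) = 0"
proof -
  interpret W: Wid \<mu> KN mS vS \<gamma> SS by (rule Wid_star)
  obtain y1 where y1: "y1 < 0" "\<And>y. y1 \<le> y \<and> y < 0 \<Longrightarrow> Wst y > 0" using pos_near0 by blast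
  have pos_iff: "epi Wst x > 0 \<longleftrightarrow> Wst x > 0" for x by (simp add: epi_def piop_ereal)
  show ?thesis
  proof (rule antisym)
    show "Sup (ereal ` {x. epi Wst x > 0}) \<le> 0"
    proof (rule SUP_least)
      fix x assume "x \<in> {x. epi Wst x > 0}"
      then have "Wst x > 0" using pos_iff by simp
      then have "x \<le> 0" using W.W_pos_neg[of x] by (force simp: Wst_def)
      then show "ereal x \<le> 0" by (simp add: zero_ereal_def)
    qed
    show "0 \<le> Sup (ereal ` {x. epi Wst x > 0})"
    proof (rule ereal_le_epsilon2)
      fix e :: real assume e: "0 < e"
      define x where "x = max y1 (- e / 2)"
      have x: "y1 \<le> x" "x < 0" using y1 e by (auto simp: x_def)
      then have "x \<in> {x. epi Wst x > 0}" using y1(2)[of x] pos_iff by simp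
      then have "ereal x \<le> Sup (ereal ` {x. epi Wst x > 0})" by (rule SUP_upper)
      moreover have "0 \<le> x + e" using e by (simp add: x_def)
      ultimately have a: "ereal x + ereal e \<le> Sup (ereal ` {x. epi Wst x > 0}) + ereal e"
        by (intro add_right_mono) auto
      have b: "0 \<le> ereal x + ereal e" using \<open>0 \<le> x + e\<close> by (simp add: zero_ereal_def)
      show "0 \<le> Sup (ereal ` {x. epi Wst x > 0}) + ereal e" using order_trans[OF b a] .
    qed
  qed
qed

end

context Wl
begin

lemma lin_deriv: "(l j has_real_derivative s j) (at x)"
proof -
  have e: "l j = (\<lambda>y. l j 0 + s j * (y - 0))" by (rule ext) (rule lin_affine)
  have "((\<lambda>y. l j 0 + s j * (y - 0)) has_real_derivative s j) (at x)"
    by (auto intro!: derivative_eq_intros)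
  then show ?thesis using e by simp
qed

lemma W_deriv_local:
  assumes d: "0 < d" and eq: "\<And>y. dist y x < d \<Longrightarrow> W y = l j y"
  shows "(W has_real_derivative s j) (at x)"
proof -
  have "(l j has_real_derivative s j) (at x within UNIV)" using lin_deriv by simp
  then have "(W has_real_derivative s j) (at x within UNIV)"
    by (rule has_field_derivative_transform_within[OF _ d]) (use eq in auto)
  then show ?thesis by simp
qed

lemma open_piece:
  assumes j: "j \<le> K + 2" and a: "0 < j \<Longrightarrow> x < b j" and c: "j < K + 2 \<Longrightarrow> b (Suc j) < x"
  shows "\<exists>d>0. \<forall>y. dist y x < d \<longrightarrow> W y = l j y"
proof -
  define d1 where "d1 = (if 0 < j then b j - x else 1)"
  define d2 where "d2 = (if j < K + 2 then x - b (Suc j) else 1)"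
  have d1: "d1 > 0" using a by (simp add: d1_def)
  have d2: "d2 > 0" using c by (simp add: d2_def)
  show ?thesis
  proof (intro exI conjI allI impI)
    show "min d1 d2 > 0" using d1 d2 by simp
    fix y assume y: "dist y x < min d1 d2"
    then have y1: "\<bar>y - x\<bar> < d1" and y2: "\<bar>y - x\<bar> < d2" by (auto simp: dist_real_def)
    show "W y = l j y"
    proof (rule W_piece[OF j])
      assume "0 < j"
      then have "d1 = b j - x" by (simp add: d1_def)
      then show "y \<le> b j" using y1 by linarith
    next
      assume "j < K + 2"
      then have "d2 = x - b (Suc j)" by (simp add: d2_def)
      then show "b (Suc j) \<le> y" using y2 by linarith
    qed
  qed
qed

lemma local_piece:
  assumes nb: "x \<notin> b ` {1..K + 2}"
  shows "\<exists>j \<le> K + 2. \<exists>d>0. \<forall>y. dist y x < d \<longrightarrow> W y = l j y"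
proof -
  from piece_exists[of x] obtain j where
    jall: "j \<le> K + 2 \<and> (0 < j \<longrightarrow> x \<le> b j) \<and> (j < K + 2 \<longrightarrow> b (Suc j) \<le> x) \<and> (b (Suc K) \<le> x \<longrightarrow> j \<le> K)"
    by (elim exE)
  have j1: "j \<le> K + 2" and j2: "0 < j \<longrightarrow> x \<le> b j" and j3: "j < K + 2 \<longrightarrow> b (Suc j) \<le> x"
    using jall by simp_all
  have a: "x < b j" if jp: "0 < j"
  proof -
    have "1 \<le> j" using jp by simp
    then have "j \<in> {1..K + 2}" using j1 by simp
    then have "b j \<in> b ` {1..K + 2}" by (rule imageI)
    then have "x \<noteq> b j" using nb by metis
    moreover have "x \<le> b j" using j2 jp by simp
    ultimately show "x < b j" by simp
  qed
  have c: "b (Suc j) < x" if jl: "j < K + 2"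
  proof -
    have "Suc j \<in> {1..K + 2}" using jl by simp
    then have "b (Suc j) \<in> b ` {1..K + 2}" by (rule imageI)
    then have "x \<noteq> b (Suc j)" using nb by metis
    moreover have "b (Suc j) \<le> x" using j3 jl by simp
    ultimately show "b (Suc j) < x" by simp
  qed
  obtain d where "d > 0" "\<forall>y. dist y x < d \<longrightarrow> W y = l j y" using open_piece[OF j1 a c] by blast
  then show ?thesis using j1 by blast
qed

lemma W_differentiable: "x \<notin> b ` {1..K + 2} \<Longrightarrow> \<exists>d. (W has_real_derivative d) (at x)"
proof -
  assume "x \<notin> b ` {1..K + 2}"
  then obtain j d where "0 < d" "\<forall>y. dist y x < d \<longrightarrow> W y = l j y" using local_piece by blast
  then have "(W has_real_derivative s j) (at x)" by (intro W_deriv_local) auto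
  then show ?thesis by blast
qed

end

context wpar
begin

lemma wave_vals:
  assumes tw: "traveling_wave \<gamma> \<mu> g v" and ne: "g y \<noteq> -\<infinity>"
  shows "0 \<le> g y"
proof -
  have "g y = step \<gamma> \<mu> g (y + v)" using fun_cong[OF tw_step[OF tw], of "y + v"] by (simp add: shift_def)
  then have eq: "g y = piop (Phi \<gamma> \<mu> (sfun \<gamma> \<mu> g) g (y + v))" by (simp add: step_def)
  then have p: "piop (Phi \<gamma> \<mu> (sfun \<gamma> \<mu> g) g (y + v)) \<noteq> -\<infinity>" using ne by simp
  have "0 \<le> piop (Phi \<gamma> \<mu> (sfun \<gamma> \<mu> g) g (y + v))" using piop_ge[OF p] by simp
  then show ?thesis using eq by simp
qed

lemma ereal_ge_split: "ereal a \<le> ereal b + P \<Longrightarrow> ereal (a - b) \<le> P"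
  by (cases P) auto

lemma wave_pos:
  assumes adm: "admissible_wave g" and tw: "traveling_wave \<gamma> \<mu> g v"
  shows "\<exists>y. g y > 0"
proof (rule ccontr)
  assume "\<not> (\<exists>y. g y > 0)"
  then have le0: "g y \<le> 0" for y by (simp add: not_less)
  have fin: "g y \<noteq> \<infinity>" for y using adm by (simp add: admissible_wave_def)
  define S where "S = sfun \<gamma> \<mu> g"
  have stx: "g (x - v) = piop (Phi \<gamma> \<mu> S g x)" for x
    using fun_cong[OF tw_step[OF tw], of x] by (simp add: step_def shift_def S_def)
  have Phile: "Phi \<gamma> \<mu> S g x \<le> 0" for x
  proof (rule ccontr)
    assume "\<not> Phi \<gamma> \<mu> S g x \<le> 0"
    then have "piop (Phi \<gamma> \<mu> S g x) > 0" by (simp add: piop_def not_le)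
    then show False using stx[of x] le0[of "x - v"] by simp
  qed
  obtain y0 where y0: "g y0 \<ge> 0" using adm by (auto simp: admissible_wave_def support_def)
  have gy0: "g y0 = 0" using y0 le0[of y0] by simp
  have Dlow: "ereal (- \<bar>x - y\<bar>) \<le> Dg g x" if "g y = 0" for x y
    using Dg_lower[of g y x] that by simp
  have Dup: "Dg g x \<le> 0" for x
    unfolding Dg_def
  proof (rule SUP_least)
    fix y show "g y - ereal \<bar>x - y\<bar> \<le> 0" using le0[of y] by (cases "g y") auto
  qed
  have Dfin: "Dg g x = ereal (real_of_ereal (Dg g x))" for x
  proof -
    have "Dg g x \<noteq> -\<infinity>" using Dlow[OF gy0, of x] by auto
    moreover have "Dg g x \<noteq> \<infinity>" using Dup[of x] by auto
    ultimately show ?thesis by (simp add: ereal_real_cases)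
  qed
  have SnM: "S \<noteq> -\<infinity>"
  proof
    assume "S = -\<infinity>"
    then have "Phi \<gamma> \<mu> S g y0 = ereal (1 - \<gamma>) + Dg g y0" by (simp add: Phi_eq)
    moreover have "ereal 0 \<le> Dg g y0" using Dlow[OF gy0, of y0] by simp
    moreover have "ereal (1 - \<gamma>) + ereal 0 \<le> ereal (1 - \<gamma>) + Dg g y0"
      using \<open>ereal 0 \<le> Dg g y0\<close> by (rule add_left_mono)
    ultimately have "Phi \<gamma> \<mu> S g y0 \<ge> ereal (1 - \<gamma>)" by simp
    then have "ereal (1 - \<gamma>) \<le> 0" using Phile[of y0] by (rule order_trans)
    then have "1 - \<gamma> \<le> 0" by (simp add: zero_ereal_def)
    then show False using ga1 by simp
  qed
  have SnP: "S \<noteq> \<infinity>"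
  proof
    assume "S = \<infinity>"
    then have "Phi \<gamma> \<mu> S g (y0 + v) = -\<infinity>" using mu0 unfolding Phi_eq by (subst Dfin) simp
    then have "g y0 = -\<infinity>" using stx[of "y0 + v"] by (simp add: piop_def)
    then show False using gy0 by simp
  qed
  define s where "s = real_of_ereal S"
  have Ss: "S = ereal s" using SnM SnP by (simp add: s_def ereal_real_cases)
  define T where "T = {x. ereal \<gamma> \<le> pfun \<gamma> \<mu> g x}"
  have ST: "Sup (ereal ` T) = ereal s" using Ss by (simp add: S_def sfun_def T_def)
  define \<delta> where "\<delta> = \<gamma> / (2 * (1 + \<mu>))"
  have dpos: "\<delta> > 0" using ga0 mu0 by (simp add: \<delta>_def)
  have d2: "(1 + \<mu>) * \<delta> = \<gamma> / 2" using mu0 by (simp add: \<delta>_def field_simps)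
  have "ereal (s - \<delta>) < Sup (ereal ` T)" using ST dpos by simp
  then obtain x1 where x1: "x1 \<in> T" "s - \<delta> < x1" by (auto simp: less_SUP_iff)
  have x1s: "x1 \<le> s"
  proof -
    have "ereal x1 \<le> Sup (ereal ` T)" using x1(1) by (rule SUP_upper)
    then show ?thesis using ST by simp
  qed
  define c where "c = min 1 \<mu>"
  have "ereal \<gamma> \<le> piop (ereal (1 - \<gamma>) + Pc c g x1)" using x1(1) by (simp add: T_def pfun_eq c_def)
  then have "ereal \<gamma> \<le> ereal (1 - \<gamma>) + Pc c g x1" using ga0 by (auto simp: piop_def split: if_splits)
  then have "ereal (2 * \<gamma> - 1) \<le> Pc c g x1" using ereal_ge_split[of \<gamma> "1 - \<gamma>"] by simp
  then have "ereal (2 * \<gamma> - 1 - \<delta>) < Pc c g x1" using dpos by (cases "Pc c g x1") auto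
  then obtain y1 where y1: "ereal (2 * \<gamma> - 1 - \<delta>) < g y1 - ereal (c * max (x1 - y1) 0)"
    by (auto simp: Pc_def less_SUP_iff)
  then have "g y1 \<noteq> -\<infinity>" by auto
  then have "0 \<le> g y1" by (rule wave_vals[OF tw])
  then have gy1: "g y1 = 0" using antisym[OF le0[of y1]] by simp
  have key: "2 * \<gamma> - 1 - \<delta> < - (c * max (x1 - y1) 0)" using y1 gy1 by simp
  define z where "z = (if \<mu> \<le> 1 then y1 else max x1 y1)"
  have star: "1 - \<gamma> - \<mu> * max (s - z) 0 - \<bar>z - y1\<bar> \<ge> 1 - \<gamma> - \<mu> * \<delta> - c * max (x1 - y1) 0"
  proof (cases "\<mu> \<le> 1")
    case True
    then have zc: "z = y1" "c = \<mu>" by (auto simp: z_def c_def)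
    have "max (s - y1) 0 \<le> \<delta> + max (x1 - y1) 0" using x1 x1s by (simp add: max_def)
    then have "\<mu> * max (s - y1) 0 \<le> \<mu> * (\<delta> + max (x1 - y1) 0)" using mu0 by (intro mult_left_mono) auto
    then show ?thesis using zc by (simp add: algebra_simps)
  next
    case False
    then have c1: "c = 1" by (simp add: c_def)
    show ?thesis
    proof (cases "y1 \<le> x1")
      case True
      then have zx: "z = x1" using False by (simp add: z_def)
      have "max (s - x1) 0 \<le> \<delta>" using x1 x1s by simp
      then have "\<mu> * max (s - x1) 0 \<le> \<mu> * \<delta>" using mu0 by (intro mult_left_mono) auto
      then show ?thesis using zx c1 True by simp
    next
      case F2: False
      then have zy: "z = y1" using False by (simp add: z_def)
      have "max (s - y1) 0 \<le> \<delta>" using x1 x1s F2 by simp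
      then have "\<mu> * max (s - y1) 0 \<le> \<mu> * \<delta>" using mu0 by (intro mult_left_mono) auto
      then show ?thesis using zy c1 F2 by simp
    qed
  qed
  have "\<mu> * \<delta> \<le> (1 + \<mu>) * \<delta>" using dpos by simp
  moreover have "(1 + \<mu>) * \<delta> = \<delta> + \<mu> * \<delta>" by (simp add: algebra_simps)
  ultimately have pos: "1 - \<gamma> - \<mu> * max (s - z) 0 - \<bar>z - y1\<bar> > 0" using star key d2 ga0 by linarith
  have "Phi \<gamma> \<mu> S g z = ereal (1 - \<gamma> - \<mu> * max (s - z) 0) + Dg g z" using Ss by (simp add: Phi_real)
  also have "\<dots> \<ge> ereal (1 - \<gamma> - \<mu> * max (s - z) 0) + ereal (- \<bar>z - y1\<bar>)"
    using Dlow[OF gy1, of z] by (intro add_left_mono)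
  finally have ph: "ereal (1 - \<gamma> - \<mu> * max (s - z) 0 - \<bar>z - y1\<bar>) \<le> Phi \<gamma> \<mu> S g z" by simp
  have "ereal 0 < ereal (1 - \<gamma> - \<mu> * max (s - z) 0 - \<bar>z - y1\<bar>)" using pos by simp
  then have "Phi \<gamma> \<mu> S g z > 0" using ph unfolding zero_ereal_def by (rule less_le_trans)
  then show False using Phile[of z] by simp
qed

lemma wave_normal:
  assumes adm: "admissible_wave g" and tw: "traveling_wave \<gamma> \<mu> g v"
  shows "\<exists>r. Sup (ereal ` {x. g x > 0}) = ereal r \<and> shift (- r) g = epi Wst \<and> v = vS"
proof -
  define A where "A = {x. g x > 0}"
  have fin: "g y \<noteq> \<infinity>" for y using adm by (simp add: admissible_wave_def)
  have cc: "concave_ext g" using adm by (simp add: admissible_wave_def)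
  have Ane: "A \<noteq> {}" using wave_pos[OF adm tw] by (auto simp: A_def)
  have cpt: "compact (support g)" using adm by (simp add: admissible_wave_def)
  have As: "A \<subseteq> support g" by (auto simp: A_def support_def)
  have bdd: "bdd_above A"
    using bounded_subset[OF compact_imp_bounded[OF cpt] As] by (rule bounded_imp_bdd_above)
  define r where "r = Sup A"
  have Sr: "Sup (ereal ` A) = ereal r"
  proof (rule antisym)
    show "Sup (ereal ` A) \<le> ereal r"
      by (rule SUP_least) (use bdd in \<open>auto simp: r_def intro: cSup_upper\<close>)
    show "ereal r \<le> Sup (ereal ` A)"
    proof (rule ereal_le_epsilon2)
      fix e :: real assume e: "0 < e"
      have "r - e < Sup A" using e by (simp add: r_def)
      then obtain x where x: "x \<in> A" "r - e < x" using less_cSup_iff[OF Ane bdd] by blast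
      have "ereal x \<le> Sup (ereal ` A)" using x(1) by (rule SUP_upper)
      then have "ereal x + ereal e \<le> Sup (ereal ` A) + ereal e" by (rule add_right_mono)
      moreover have "ereal r \<le> ereal x + ereal e" using x by simp
      ultimately show "ereal r \<le> Sup (ereal ` A) + ereal e" by (rule order_trans[rotated])
    qed
  qed
  have neg: "g y = -\<infinity>" if y: "y > r" for y
  proof (rule ccontr)
    assume gy: "g y \<noteq> -\<infinity>"
    then have gy0: "0 \<le> g y" using wave_vals[OF tw] by simp
    obtain x0 where x0: "x0 \<in> A" using Ane by blast
    have x0r: "x0 \<le> r" using x0 bdd by (simp add: r_def cSup_upper)
    obtain a where a: "g x0 = ereal a" "a > 0" using x0 fin[of x0] by (cases "g x0") (auto simp: A_def)
    obtain bb where bb: "g y = ereal bb" "bb \<ge> 0" using gy gy0 fin[of y] by (cases "g y") auto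
    define t where "t = (y - r) / (2 * (y - x0))"
    have yx0: "y - x0 > 0" using x0r y by simp
    have t: "0 < t" "t < 1" using yx0 y x0r by (auto simp: t_def field_simps)
    have tt: "t * (y - x0) = (y - r) / 2" using yx0 by (simp add: t_def field_simps)
    define z where "z = t * x0 + (1 - t) * y"
    have e1: "z = y - t * (y - x0)" by (simp add: z_def algebra_simps)
    have "z = y - (y - r) / 2" by (subst e1, subst tt, rule refl)
    also have "y - (y - r) / 2 = r + (y - r) / 2" by (simp add: field_simps)
    finally have ze: "z = r + (y - r) / 2" .
    have "(y - r) / 2 > 0" using y by simp
    then have zr: "z > r" unfolding ze by simp
    have "ereal t * g x0 + ereal (1 - t) * g y \<le> g z" using cc t unfolding concave_ext_def z_def by blast
    moreover have "ereal t * g x0 + ereal (1 - t) * g y = ereal (t * a + (1 - t) * bb)" using a bb by simp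
    moreover have "t * a + (1 - t) * bb > 0"
    proof -
      have "t * a > 0" using t a by simp
      moreover have "(1 - t) * bb \<ge> 0" using t bb by simp
      ultimately show ?thesis by linarith
    qed
    ultimately have "ereal 0 < ereal (t * a + (1 - t) * bb)" "ereal (t * a + (1 - t) * bb) \<le> g z" by auto
    then have "g z > 0" unfolding zero_ereal_def by (rule less_le_trans)
    then have "z \<in> A" by (simp add: A_def)
    then have "z \<le> r" using bdd by (simp add: r_def cSup_upper)
    then show False using zr by simp
  qed
  have gr: "g r \<noteq> -\<infinity>"
  proof -
    have cl: "closed (support g)" using cpt by (rule compact_imp_closed)
    have "\<forall>e>0. \<exists>y\<in>support g. dist y r < e"
    proof (intro allI impI)
      fix e :: real assume e: "e > 0"
      have "r - e < Sup A" using e by (simp add: r_def)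
      then obtain x where x: "x \<in> A" "r - e < x" using less_cSup_iff[OF Ane bdd] by blast
      have "x \<le> r" using x bdd by (simp add: r_def cSup_upper)
      then show "\<exists>y\<in>support g. dist y r < e" using x As by (intro bexI[of _ x]) (auto simp: dist_real_def)
    qed
    then have "r \<in> support g" using closed_approachable[OF cl] by blast
    then show ?thesis by (auto simp: support_def)
  qed
  define h where "h = shift (- r) g"
  have hadm: "admissible_wave h" unfolding h_def by (rule admissible_shift[OF adm])
  have htw: "traveling_wave \<gamma> \<mu> h v" unfolding h_def by (rule tw_shift[OF tw])
  have hst: "step \<gamma> \<mu> h = shift v h" by (rule tw_step[OF htw])
  have hneg: "\<And>y. y > 0 \<Longrightarrow> h y = -\<infinity>" using neg by (simp add: h_def shift_def)
  have h0: "h 0 \<noteq> -\<infinity>" using gr by (simp add: h_def shift_def)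
  have hpos: "\<exists>y. h y > 0"
  proof -
    obtain x0 where "x0 \<in> A" using Ane by blast
    then have "h (x0 - r) > 0" by (simp add: h_def shift_def A_def)
    then show ?thesis by blast
  qed
  have "h = epi Wst \<and> v = vS" by (rule wave_is_W[OF hadm hst hneg h0 hpos])
  then show ?thesis using Sr by (auto simp: A_def h_def)
qed

end

context wpar
begin

lemma Wst_supp:
  "\<exists>L<0. {y. 0 \<le> Wst y} = {L..0}"
proof -
  interpret W: Wid \<mu> KN mS vS \<gamma> SS by (rule Wid_star)
  define A where "A = {y. 0 \<le> Wst y}"
  obtain B where B: "\<And>y. Wst y \<ge> 0 \<Longrightarrow> - B \<le> y \<and> y \<le> 0" using W_support_bounded by blast
  have "0 \<in> A" using W.W0 by (simp add: A_def Wst_def)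
  then have ne: "A \<noteq> {}" by blast
  have bdd: "bdd_below A" using B by (auto simp: A_def bdd_below_def)
  have cl: "closed A" unfolding A_def
    by (rule closed_Collect_le) (auto simp: Wst_def intro: W.W_cont continuous_on_const)
  define L where "L = Inf A"
  have LA: "L \<in> A" using closed_contains_Inf[OF ne bdd cl] by (simp add: L_def)
  have eq: "A = {L..0}"
  proof (intro set_eqI iffI)
    fix y assume y: "y \<in> A"
    then have "L \<le> y" using bdd by (simp add: L_def cInf_lower)
    moreover have "y \<le> 0" using y B by (auto simp: A_def)
    ultimately show "y \<in> {L..0}" by simp
  next
    fix y assume y: "y \<in> {L..0}"
    have "0 \<le> Wf \<mu> KN mS vS y" using W.W_supp_conv[of L y] LA y by (auto simp: A_def Wst_def)
    then show "y \<in> A" by (simp add: A_def Wst_def)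
  qed
  obtain y1 where y1: "y1 < 0" "Wst y1 > 0" using pos_point by blast
  then have "y1 \<in> A" by (simp add: A_def)
  then have "L < 0" using y1 eq by auto
  then show ?thesis using eq by (auto simp: A_def)
qed

lemma deriv_within_piece:
  assumes j: "j \<le> KN + 2" and d: "0 < d" and eq: "\<And>y. dist y x < d \<Longrightarrow> Wst y = lin \<mu> KN mS vS j y"
    and L: "{y. 0 \<le> Wst y} = {L..0}" and x: "x \<in> {L..0}"
  shows "((\<lambda>y. real_of_ereal (epi Wst y)) has_real_derivative sig \<mu> KN j) (at x within {L..0})"
proof -
  interpret W: Wid \<mu> KN mS vS \<gamma> SS by (rule Wid_star)
  have e: "\<And>y. dist y x < d \<Longrightarrow> Wf \<mu> KN mS vS y = lin \<mu> KN mS vS j y"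
    using eq unfolding Wst_def .
  have D0: "(Wf \<mu> KN mS vS has_real_derivative sig \<mu> KN j) (at x)" by (rule W.W_deriv_local[OF d e])
  have D1: "(Wst has_real_derivative sig \<mu> KN j) (at x within {L..0})"
    unfolding Wst_def by (rule has_field_derivative_at_within[OF D0])
  have agree: "Wst y = real_of_ereal (epi Wst y)" if "y \<in> {L..0}" "dist y x < 1" for y
  proof -
    have "y \<in> {y. 0 \<le> Wst y}" using that(1) L by blast
    then have "0 \<le> Wst y" by blast
    then show ?thesis by (simp add: epi_def piop_ereal)
  qed
  show ?thesis
  proof (rule has_field_derivative_transform_within[OF D1 zero_less_one x])
    fix y assume "y \<in> {L..0}" "dist y x < 1"
    then show "Wst y = real_of_ereal (epi Wst y)" by (rule agree)
  qed
qed

lemma open_piece_star: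
  assumes j: "j \<le> KN + 2" and a: "0 < j \<Longrightarrow> x < bp mS vS j" and c: "j < KN + 2 \<Longrightarrow> bp mS vS (Suc j) < x"
    and L: "{y. 0 \<le> Wst y} = {L..0}" and x: "x \<in> {L..0}"
  shows "((\<lambda>y. real_of_ereal (epi Wst y)) has_real_derivative sig \<mu> KN j) (at x within {L..0})"
proof -
  interpret W: Wid \<mu> KN mS vS \<gamma> SS by (rule Wid_star)
  obtain d where d: "d > 0" "\<forall>y. dist y x < d \<longrightarrow> Wf \<mu> KN mS vS y = lin \<mu> KN mS vS j y"
    using W.open_piece[OF j a c] by blast
  show ?thesis by (rule deriv_within_piece[OF j d(1) _ L x]) (use d in \<open>simp add: Wst_def\<close>)
qed

lemma s_eq_star: "Sup (ereal ` {\<xi>. ereal \<gamma> \<le> (SUP x. Phi \<gamma> \<mu> (ereal \<xi>) (epi Wst) x)}) = ereal SS"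
proof -
  have fin: "\<And>y. epi Wst y \<noteq> \<infinity>" by (simp add: epi_def piop_ereal)
  have "{\<xi>. ereal \<gamma> \<le> (SUP x. Phi \<gamma> \<mu> (ereal \<xi>) (epi Wst) x)} = {\<xi>. ereal \<gamma> \<le> pfun \<gamma> \<mu> (epi Wst) \<xi>}"
  proof (intro set_eqI)
    fix \<xi>
    define z where "z = ereal (1 - \<gamma>) + Pc (min 1 \<mu>) (epi Wst) \<xi>"
    have a: "(SUP x. Phi \<gamma> \<mu> (ereal \<xi>) (epi Wst) x) = z"
      unfolding z_def by (rule SUP_Phi[OF fin]) (use mu0 in simp)
    have b: "pfun \<gamma> \<mu> (epi Wst) \<xi> = piop z" by (simp add: pfun_eq z_def)
    have "(ereal \<gamma> \<le> z) = (ereal \<gamma> \<le> piop z)"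
    proof
      assume "ereal \<gamma> \<le> z"
      moreover have "(0::ereal) \<le> ereal \<gamma>" using ga0 by (simp add: zero_ereal_def)
      ultimately have "0 \<le> z" by (rule order_trans[rotated])
      then show "ereal \<gamma> \<le> piop z" using \<open>ereal \<gamma> \<le> z\<close> by (simp add: piop_def)
    next
      assume h: "ereal \<gamma> \<le> piop z"
      then have "piop z \<noteq> -\<infinity>" by auto
      then have "piop z = z" using piop_ge by blast
      then show "ereal \<gamma> \<le> z" using h by simp
    qed
    then show "\<xi> \<in> {\<xi>. ereal \<gamma> \<le> (SUP x. Phi \<gamma> \<mu> (ereal \<xi>) (epi Wst) x)} \<longleftrightarrow> \<xi> \<in> {\<xi>. ereal \<gamma> \<le> pfun \<gamma> \<mu> (epi Wst) \<xi>}"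
      using a b by simp
  qed
  then show ?thesis using sfun_star by (simp add: sfun_def)
qed

lemma speed_part:
  "\<mu> < 1 \<longrightarrow> 0 < gamma_c \<mu> \<and> gamma_c \<mu> < 1
          \<and> (\<forall>a b. 0 < a \<and> a < b \<and> b \<le> gamma_c \<mu> \<longrightarrow> speed_formula \<mu> a < speed_formula \<mu> b)
          \<and> (\<forall>a b. gamma_c \<mu> \<le> a \<and> a < b \<and> b < 1 \<longrightarrow> speed_formula \<mu> b < speed_formula \<mu> a)
          \<and> (\<forall>a. 0 < a \<and> a < 1 \<longrightarrow> speed_formula \<mu> a \<le> speed_formula \<mu> (gamma_c \<mu>))"
proof
  assume m1: "\<mu> < 1"
  have D: "Dk > 0" by (rule Dk_pos[OF m1])
  define gc where "gc = gamma_c \<mu>"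
  have gc: "gc = Dk / (2 + Dk)" by (simp add: gc_def gc_eq)
  have gc0: "0 < gc" using D by (simp add: gc)
  have gc1: "gc < 1" using D by (simp add: gc)
  have den: "kk \<mu> * (2 - (kk \<mu> + 1) * \<mu>) = Dk" by (simp add: Dk_def kN_real)
  have sf: "speed_formula \<mu> a = (if a \<le> gc then 2 * a / Dk else 1 - a)" for a
    by (simp add: speed_formula_def gc_def den)
  have c1: "2 * gc = Dk * (2 / (2 + Dk))" by (simp add: gc)
  have c2: "2 * gc / Dk = 2 / (2 + Dk)" using D by (simp add: c1)
  have c3: "1 - gc = 2 / (2 + Dk)" using two_Dk_pos by (simp add: gc field_simps)
  have cont: "2 * gc / Dk = 1 - gc" using c2 c3 by simp
  show "0 < gamma_c \<mu> \<and> gamma_c \<mu> < 1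
          \<and> (\<forall>a b. 0 < a \<and> a < b \<and> b \<le> gamma_c \<mu> \<longrightarrow> speed_formula \<mu> a < speed_formula \<mu> b)
          \<and> (\<forall>a b. gamma_c \<mu> \<le> a \<and> a < b \<and> b < 1 \<longrightarrow> speed_formula \<mu> b < speed_formula \<mu> a)
          \<and> (\<forall>a. 0 < a \<and> a < 1 \<longrightarrow> speed_formula \<mu> a \<le> speed_formula \<mu> (gamma_c \<mu>))"
  proof (intro conjI allI impI)
    show "0 < gamma_c \<mu>" using gc0 by (simp add: gc_def)
    show "gamma_c \<mu> < 1" using gc1 by (simp add: gc_def)
  next
    fix a b :: real assume ab: "0 < a \<and> a < b \<and> b \<le> gamma_c \<mu>"
    then have "a \<le> gc" "b \<le> gc" by (auto simp: gc_def)
    moreover have "2 * a / Dk < 2 * b / Dk" using ab D by (simp add: divide_strict_right_mono)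
    ultimately show "speed_formula \<mu> a < speed_formula \<mu> b" by (simp add: sf)
  next
    fix a b :: real assume ab: "gamma_c \<mu> \<le> a \<and> a < b \<and> b < 1"
    then have b: "\<not> b \<le> gc" by (auto simp: gc_def)
    have "speed_formula \<mu> a \<ge> 1 - a"
    proof (cases "a \<le> gc")
      case True
      then have "a = gc" using ab by (simp add: gc_def)
      then show ?thesis using cont by (simp add: sf)
    next
      case False then show ?thesis by (simp add: sf)
    qed
    then show "speed_formula \<mu> b < speed_formula \<mu> a" using b ab by (simp add: sf)
  next
    fix a :: real assume a: "0 < a \<and> a < 1"
    have top: "speed_formula \<mu> (gamma_c \<mu>) = 1 - gc" using cont by (simp add: sf gc_def[symmetric])
    show "speed_formula \<mu> a \<le> speed_formula \<mu> (gamma_c \<mu>)"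
    proof (cases "a \<le> gc")
      case True
      then have "2 * a / Dk \<le> 2 * gc / Dk" using D by (simp add: divide_right_mono)
      then show ?thesis using True top cont by (simp add: sf)
    next
      case False then show ?thesis using top by (simp add: sf)
    qed
  qed
qed

end

context wpar
begin

lemma deriv_transform:
  assumes D0: "(Wst has_real_derivative D) (at x)"
    and L: "{y. 0 \<le> Wst y} = {L..0}" and x: "x \<in> {L..0}"
  shows "((\<lambda>y. real_of_ereal (epi Wst y)) has_real_derivative D) (at x within {L..0})"
proof -
  have D1: "(Wst has_real_derivative D) (at x within {L..0})" by (rule has_field_derivative_at_within[OF D0])
  have agree: "Wst y = real_of_ereal (epi Wst y)" if "y \<in> {L..0}" "dist y x < 1" for y
  proof -
    have "y \<in> {y. 0 \<le> Wst y}" using that(1) L by blast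
    then have "0 \<le> Wst y" by blast
    then show ?thesis by (simp add: epi_def piop_ereal)
  qed
  show ?thesis
  proof (rule has_field_derivative_transform_within[OF D1 zero_less_one x])
    fix y assume "y \<in> {L..0}" "dist y x < 1"
    then show "Wst y = real_of_ereal (epi Wst y)" by (rule agree)
  qed
qed

lemma props_star:
  assumes hg: "g = epi Wst" and hv: "v = vS"
  shows "(\<exists>L < 0. support g = {L..0}
            \<and> (\<forall>x. x \<notin> {L..0} \<longrightarrow> g x = -\<infinity>)
            \<and> (\<exists>F g'. finite F
                 \<and> (\<forall>x \<in> {L..0} - F.
                      ((\<lambda>y. real_of_ereal (g y)) has_real_derivative g' x) (at x within {L..0}))
                 \<and> (\<forall>x \<in> {L..0}. (g' has_integral (- real_of_ereal (g x))) {x..0}))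
            \<and> (\<exists>s::real. Sup (ereal ` {\<xi>. (SUP x. Phi \<gamma> \<mu> (ereal \<xi>) g x) \<ge> ereal \<gamma>}) = ereal s
                \<and> (\<gamma> \<le> gamma_c \<mu> \<longrightarrow>
                     \<mu> < 1
                     \<and> v = 2 * \<gamma> / (kk \<mu> * (2 - (kk \<mu> + 1) * \<mu>))
                     \<and> v \<le> s
                     \<and> (\<forall>j::nat. \<forall>x \<in> {L..0}. 1 \<le> j \<and> - (real j * v) < x \<and> x < - ((real j - 1) * v) \<longrightarrow>
                          ((\<lambda>y. real_of_ereal (g y)) has_real_derivative (real j * \<mu> - 1))
                            (at x within {L..0})))
                \<and> (\<gamma> > gamma_c \<mu> \<longrightarrow>
                     v = 1 - \<gamma>
                     \<and> v - s = 1 - (1 - \<gamma>) * (kk \<mu> * (1 - (kk \<mu> + 1) / 2 * \<mu>) + 1)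
                     \<and> v - s > 0
                     \<and> (\<exists>F. finite F \<and> (\<forall>x \<in> {L..0} - F.
                          (x > s - v \<longrightarrow>
                             ((\<lambda>y. real_of_ereal (g y)) has_real_derivative (-1)) (at x within {L..0}))
                          \<and> (\<forall>j::nat. 1 \<le> j \<and> real j \<le> KK \<mu> + 1 \<and>
                                s - (real j + 1) * v < x \<and> x < s - real j * v \<longrightarrow>
                             ((\<lambda>y. real_of_ereal (g y)) has_real_derivative (real j * \<mu> - 1))
                               (at x within {L..0}))
                          \<and> (x < s - (KK \<mu> + 2) * v \<longrightarrow>
                             ((\<lambda>y. real_of_ereal (g y)) has_real_derivative (1 + \<mu>))
                               (at x within {L..0})))))))"
proof -
  interpret W: Wid \<mu> KN mS vS \<gamma> SS by (rule Wid_star)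
  obtain L where Lneg: "L < 0" and L: "{y. 0 \<le> Wst y} = {L..0}" using Wst_supp by blast
  have supp: "support (epi Wst) = {L..0}"
    using L by (simp add: support_def epi_def piop_ereal)
  have outside: "\<forall>x. x \<notin> {L..0} \<longrightarrow> epi Wst x = -\<infinity>"
  proof (intro allI impI)
    fix x assume "x \<notin> {L..0}"
    then have "x \<notin> {y. 0 \<le> Wst y}" using L by simp
    then show "epi Wst x = -\<infinity>" by (simp add: epi_def piop_ereal)
  qed
  have realW: "real_of_ereal (epi Wst y) = Wst y" if "y \<in> {L..0}" for y
  proof -
    have "y \<in> {y. 0 \<le> Wst y}" using that L by blast
    then show ?thesis by (simp add: epi_def piop_ereal)
  qed
  define F where "F = bp mS vS ` {1..KN + 2}"
  define g' where "g' x = (SOME d. (Wst has_real_derivative d) (at x))" for x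
  have finF: "finite F" by (simp add: F_def)
  have g'D: "(Wst has_real_derivative g' x) (at x)" if "x \<notin> F" for x
  proof -
    have "\<exists>d. (Wf \<mu> KN mS vS has_real_derivative d) (at x)"
      using W.W_differentiable that by (simp add: F_def)
    then have "\<exists>d. (Wst has_real_derivative d) (at x)" by (simp add: Wst_def)
    then show ?thesis unfolding g'_def by (rule someI_ex)
  qed
  have gen: "\<exists>F g'. finite F
                 \<and> (\<forall>x \<in> {L..0} - F.
                      ((\<lambda>y. real_of_ereal (epi Wst y)) has_real_derivative g' x) (at x within {L..0}))
                 \<and> (\<forall>x \<in> {L..0}. (g' has_integral (- real_of_ereal (epi Wst x))) {x..0})"
  proof (intro exI conjI ballI)
    show "finite F" by (rule finF)
  next
    fix x assume x: "x \<in> {L..0} - F"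
    then show "((\<lambda>y. real_of_ereal (epi Wst y)) has_real_derivative g' x) (at x within {L..0})"
      using deriv_transform[OF g'D L] by blast
  next
    fix x assume x: "x \<in> {L..0}"
    have "(g' has_integral (Wst 0 - Wst x)) {x..0}"
    proof (rule fundamental_theorem_of_calculus_interior_strong[OF finF])
      show "x \<le> 0" using x by simp
      show "continuous_on {x..0} Wst" unfolding Wst_def by (rule W.W_cont)
      fix t assume "t \<in> {x<..<0} - F"
      then have "(Wst has_real_derivative g' t) (at t)" using g'D by blast
      then show "(Wst has_vector_derivative g' t) (at t)"
        by (simp add: has_real_derivative_iff_has_vector_derivative)
    qed
    moreover have "Wst 0 = 0" using W.W0 by (simp add: Wst_def)
    ultimately show "(g' has_integral (- real_of_ereal (epi Wst x))) {x..0}" using realW[OF x] by simp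
  qed
  have caseI: "\<mu> < 1
                     \<and> vS = 2 * \<gamma> / (kk \<mu> * (2 - (kk \<mu> + 1) * \<mu>))
                     \<and> vS \<le> SS
                     \<and> (\<forall>j::nat. \<forall>x \<in> {L..0}. 1 \<le> j \<and> - (real j * vS) < x \<and> x < - ((real j - 1) * vS) \<longrightarrow>
                          ((\<lambda>y. real_of_ereal (epi Wst y)) has_real_derivative (real j * \<mu> - 1))
                            (at x within {L..0}))" if gc: "\<gamma> \<le> gamma_c \<mu>"
  proof (intro conjI allI ballI impI)
    have cf: "\<mu> < 1" "vS \<le> 1 - \<gamma>" "vS \<le> SS" "mS = vS" using caseI_facts[OF gc] by auto
    show "\<mu> < 1" "vS \<le> SS" using cf by auto
    show "vS = 2 * \<gamma> / (kk \<mu> * (2 - (kk \<mu> + 1) * \<mu>))" using gc by (simp add: vS_def)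
    fix j :: nat and x assume x: "x \<in> {L..0}" and jx: "1 \<le> j \<and> - (real j * vS) < x \<and> x < - ((real j - 1) * vS)"
    have bpj: "bp mS vS i = - ((real i - 1) * vS)" for i using cf by (simp add: bp_def algebra_simps)
    show "((\<lambda>y. real_of_ereal (epi Wst y)) has_real_derivative (real j * \<mu> - 1)) (at x within {L..0})"
    proof (cases "j \<le> KN + 1")
      case True
      have "((\<lambda>y. real_of_ereal (epi Wst y)) has_real_derivative sig \<mu> KN j) (at x within {L..0})"
      proof (rule open_piece_star[OF _ _ _ L x])
        show "j \<le> KN + 2" using True by simp
        show "x < bp mS vS j" using jx bpj by simp
        show "bp mS vS (Suc j) < x" using jx bpj[of "Suc j"] by simp
      qed
      moreover have "sig \<mu> KN j = real j * \<mu> - 1" using True jx by (simp add: sig_def)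
      ultimately show ?thesis by simp
    next
      case False
      define e where "e = bp mS vS (KN + 2)"
      have val: "Wst e = vS * (real KN + 1) * (1 - \<mu> * (real KN + 2) / 2)"
        using W.val[of "KN + 2"] cf by (simp add: Wst_def e_def algebra_simps)
      have "1 - \<mu> * (real KN + 2) / 2 < 0"
      proof -
        have "2 < (real KN + 1) * \<mu>" by (rule KN_bounds(2))
        then have "2 < \<mu> * (real KN + 2)" using mu0 by (simp add: algebra_simps)
        then show ?thesis by simp
      qed
      then have eneg: "Wst e < 0" using val vS_pos by (simp add: mult_pos_neg)
      have "real j - 1 \<ge> real KN + 1" using False by simp
      then have "(real KN + 1) * vS \<le> (real j - 1) * vS" using vS_pos by (intro mult_right_mono) auto
      moreover have h1: "x < - ((real j - 1) * vS)" using jx by simp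
      moreover have h2: "e = - ((real KN + 1) * vS)" by (simp add: e_def bp_def cf(4) algebra_simps)
      ultimately have xe: "x \<le> e" by linarith
      have e0: "e \<le> 0" using bpj[of "KN + 2"] vS_pos by (simp add: e_def)
      have "0 \<le> Wst x" using x L by blast
      moreover have "0 \<le> Wst 0" using W.W0 by (simp add: Wst_def)
      ultimately have "0 \<le> Wst e" using W.W_conc3[of x 0 e] xe e0 by (simp add: Wst_def)
      then show ?thesis using eneg by simp
    qed
  qed
  have caseII: "vS = 1 - \<gamma>
                     \<and> vS - SS = 1 - (1 - \<gamma>) * (kk \<mu> * (1 - (kk \<mu> + 1) / 2 * \<mu>) + 1)
                     \<and> vS - SS > 0
                     \<and> (\<exists>F. finite F \<and> (\<forall>x \<in> {L..0} - F.
                          (x > SS - vS \<longrightarrow>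
                             ((\<lambda>y. real_of_ereal (epi Wst y)) has_real_derivative (-1)) (at x within {L..0}))
                          \<and> (\<forall>j::nat. 1 \<le> j \<and> real j \<le> KK \<mu> + 1 \<and>
                                SS - (real j + 1) * vS < x \<and> x < SS - real j * vS \<longrightarrow>
                             ((\<lambda>y. real_of_ereal (epi Wst y)) has_real_derivative (real j * \<mu> - 1))
                               (at x within {L..0}))
                          \<and> (x < SS - (KK \<mu> + 2) * vS \<longrightarrow>
                             ((\<lambda>y. real_of_ereal (epi Wst y)) has_real_derivative (1 + \<mu>))
                               (at x within {L..0}))))" if gc: "\<gamma> > gamma_c \<mu>"
  proof -
    have ngc: "\<not> \<gamma> \<le> gamma_c \<mu>" using gc by simp
    have m: "mS = SS" using caseii_diff[OF ngc] by (simp add: mS_def)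
    have bpj: "bp mS vS i = SS - real i * vS" for i using m by (simp add: bp_def)
    have d1: "\<forall>x \<in> {L..0} - {}.
                          (x > SS - vS \<longrightarrow>
                             ((\<lambda>y. real_of_ereal (epi Wst y)) has_real_derivative (-1)) (at x within {L..0}))
                          \<and> (\<forall>j::nat. 1 \<le> j \<and> real j \<le> KK \<mu> + 1 \<and>
                                SS - (real j + 1) * vS < x \<and> x < SS - real j * vS \<longrightarrow>
                             ((\<lambda>y. real_of_ereal (epi Wst y)) has_real_derivative (real j * \<mu> - 1))
                               (at x within {L..0}))
                          \<and> (x < SS - (KK \<mu> + 2) * vS \<longrightarrow>
                             ((\<lambda>y. real_of_ereal (epi Wst y)) has_real_derivative (1 + \<mu>))
                               (at x within {L..0}))"
    proof (intro ballI conjI allI impI)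
      fix x assume "x \<in> {L..0} - {}"
      then have x: "x \<in> {L..0}" by simp
      {
        assume h: "x > SS - vS"
        have "((\<lambda>y. real_of_ereal (epi Wst y)) has_real_derivative sig \<mu> KN 0) (at x within {L..0})"
          by (rule open_piece_star[OF _ _ _ L x]) (use h bpj[of 1] in auto)
        then show "((\<lambda>y. real_of_ereal (epi Wst y)) has_real_derivative (-1)) (at x within {L..0})"
          by (simp add: sig_def)
      }
      {
        fix j :: nat assume h: "1 \<le> j \<and> real j \<le> KK \<mu> + 1 \<and> SS - (real j + 1) * vS < x \<and> x < SS - real j * vS"
        have jK: "j \<le> KN + 1" using h KN_real by (simp flip: of_nat_Suc)
        have "((\<lambda>y. real_of_ereal (epi Wst y)) has_real_derivative sig \<mu> KN j) (at x within {L..0})"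
        proof (rule open_piece_star[OF _ _ _ L x])
          show "j \<le> KN + 2" using jK by simp
          show "x < bp mS vS j" using h bpj by simp
          show "bp mS vS (Suc j) < x" using h bpj[of "Suc j"] by (simp add: algebra_simps)
        qed
        moreover have "sig \<mu> KN j = real j * \<mu> - 1" using jK h by (simp add: sig_def)
        ultimately show "((\<lambda>y. real_of_ereal (epi Wst y)) has_real_derivative (real j * \<mu> - 1)) (at x within {L..0})"
          by simp
      }
      {
        assume h: "x < SS - (KK \<mu> + 2) * vS"
        have "x < bp mS vS (KN + 2)" using h bpj[of "KN + 2"] KN_real by (simp add: algebra_simps)
        then have "((\<lambda>y. real_of_ereal (epi Wst y)) has_real_derivative sig \<mu> KN (KN + 2)) (at x within {L..0})"
          by (intro open_piece_star[OF _ _ _ L x]) auto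
        then show "((\<lambda>y. real_of_ereal (epi Wst y)) has_real_derivative (1 + \<mu>)) (at x within {L..0})"
          by (simp add: sig_def)
      }
    qed
    show ?thesis
    proof (intro conjI)
      show "vS = 1 - \<gamma>" using ngc by (simp add: vS_def)
      show "vS - SS = 1 - (1 - \<gamma>) * (kk \<mu> * (1 - (kk \<mu> + 1) / 2 * \<mu>) + 1)" using ngc by (simp add: SS_def)
      show "vS - SS > 0" using caseii_diff[OF ngc] by simp
      show "\<exists>F. finite F \<and> (\<forall>x \<in> {L..0} - F.
                          (x > SS - vS \<longrightarrow>
                             ((\<lambda>y. real_of_ereal (epi Wst y)) has_real_derivative (-1)) (at x within {L..0}))
                          \<and> (\<forall>j::nat. 1 \<le> j \<and> real j \<le> KK \<mu> + 1 \<and>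
                                SS - (real j + 1) * vS < x \<and> x < SS - real j * vS \<longrightarrow>
                             ((\<lambda>y. real_of_ereal (epi Wst y)) has_real_derivative (real j * \<mu> - 1))
                               (at x within {L..0}))
                          \<and> (x < SS - (KK \<mu> + 2) * vS \<longrightarrow>
                             ((\<lambda>y. real_of_ereal (epi Wst y)) has_real_derivative (1 + \<mu>))
                               (at x within {L..0})))"
        using d1 by (intro exI[of _ "{}"]) simp
    qed
  qed
  show ?thesis unfolding hg hv
    using Lneg supp outside gen s_eq_star caseI caseII by blast
qed

end

theorem theoremS3p1:
  fixes \<gamma> \<mu> :: real
  assumes "0 < \<gamma>" and "\<gamma> < 1" and "0 < \<mu>" and "\<mu> \<noteq> 1"
  shows
    \<comment> \<open>existence (of a wave, which can be normalized)\<close>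
    "(\<exists>g v. admissible_wave g \<and> traveling_wave \<gamma> \<mu> g v
            \<and> Sup (ereal ` {x. g x > 0}) = 0)
     \<comment> \<open>uniqueness up to translation\<close>
     \<and> (\<forall>g1 v1 g2 v2. admissible_wave g1 \<and> traveling_wave \<gamma> \<mu> g1 v1 \<and>
           admissible_wave g2 \<and> traveling_wave \<gamma> \<mu> g2 v2 \<longrightarrow>
           (\<exists>c. \<forall>x. g2 x = g1 (x - c)))
     \<comment> \<open>properties of the normalized wave\<close>
     \<and> (\<forall>g v. admissible_wave g \<and> traveling_wave \<gamma> \<mu> g v
            \<and> Sup (ereal ` {x. g x > 0}) = 0 \<longrightarrow>
          (\<exists>L < 0. support g = {L..0}
            \<and> (\<forall>x. x \<notin> {L..0} \<longrightarrow> g x = -\<infinity>)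
            \<and> (\<exists>F g'. finite F
                 \<and> (\<forall>x \<in> {L..0} - F.
                      ((\<lambda>y. real_of_ereal (g y)) has_real_derivative g' x) (at x within {L..0}))
                 \<and> (\<forall>x \<in> {L..0}. (g' has_integral (- real_of_ereal (g x))) {x..0}))
            \<and> (\<exists>s::real. Sup (ereal ` {\<xi>. (SUP x. Phi \<gamma> \<mu> (ereal \<xi>) g x) \<ge> ereal \<gamma>}) = ereal s
                \<and> (\<gamma> \<le> gamma_c \<mu> \<longrightarrow>
                     \<mu> < 1
                     \<and> v = 2 * \<gamma> / (kk \<mu> * (2 - (kk \<mu> + 1) * \<mu>))
                     \<and> v \<le> s
                     \<and> (\<forall>j::nat. \<forall>x \<in> {L..0}. 1 \<le> j \<and> - (real j * v) < x \<and> x < - ((real j - 1) * v) \<longrightarrow>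
                          ((\<lambda>y. real_of_ereal (g y)) has_real_derivative (real j * \<mu> - 1))
                            (at x within {L..0})))
                \<and> (\<gamma> > gamma_c \<mu> \<longrightarrow>
                     v = 1 - \<gamma>
                     \<and> v - s = 1 - (1 - \<gamma>) * (kk \<mu> * (1 - (kk \<mu> + 1) / 2 * \<mu>) + 1)
                     \<and> v - s > 0
                     \<and> (\<exists>F. finite F \<and> (\<forall>x \<in> {L..0} - F.
                          (x > s - v \<longrightarrow>
                             ((\<lambda>y. real_of_ereal (g y)) has_real_derivative (-1)) (at x within {L..0}))
                          \<and> (\<forall>j::nat. 1 \<le> j \<and> real j \<le> KK \<mu> + 1 \<and>
                                s - (real j + 1) * v < x \<and> x < s - real j * v \<longrightarrow>
                             ((\<lambda>y. real_of_ereal (g y)) has_real_derivative (real j * \<mu> - 1))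
                               (at x within {L..0}))
                          \<and> (x < s - (KK \<mu> + 2) * v \<longrightarrow>
                             ((\<lambda>y. real_of_ereal (g y)) has_real_derivative (1 + \<mu>))
                               (at x within {L..0}))))))))
     \<comment> \<open>in particular: the speed, as a function of \<gamma>, changes monotonicity at \<gamma>_c and is maximal there\<close>
     \<and> (\<mu> < 1 \<longrightarrow> 0 < gamma_c \<mu> \<and> gamma_c \<mu> < 1
          \<and> (\<forall>a b. 0 < a \<and> a < b \<and> b \<le> gamma_c \<mu> \<longrightarrow> speed_formula \<mu> a < speed_formula \<mu> b)
          \<and> (\<forall>a b. gamma_c \<mu> \<le> a \<and> a < b \<and> b < 1 \<longrightarrow> speed_formula \<mu> b < speed_formula \<mu> a)
          \<and> (\<forall>a. 0 < a \<and> a < 1 \<longrightarrow> speed_formula \<mu> a \<le> speed_formula \<mu> (gamma_c \<mu>)))"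
proof -
  interpret wpar \<gamma> \<mu> using assms by unfold_locales
  have rep: "\<exists>r. (\<forall>x. g x = epi Wst (x - r)) \<and> Sup (ereal ` {x. g x > 0}) = ereal r \<and> v = vS"
    if hw: "admissible_wave g" "traveling_wave \<gamma> \<mu> g v" for g v
  proof -
    obtain r where r: "Sup (ereal ` {x. g x > 0}) = ereal r" "shift (- r) g = epi Wst" "v = vS"
      using wave_normal[OF hw] by blast
    have "g x = epi Wst (x - r)" for x
      using fun_cong[OF r(2), of "x - r"] by (simp add: shift_def)
    then show ?thesis using r by blast
  qed
  have P1: "(\<exists>g v. admissible_wave g \<and> traveling_wave \<gamma> \<mu> g v
            \<and> Sup (ereal ` {x. g x > 0}) = 0)"
    using adm_star tw_star norm_star by blast
  have P2: "(\<forall>g1 v1 g2 v2. admissible_wave g1 \<and> traveling_wave \<gamma> \<mu> g1 v1 \<and>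
           admissible_wave g2 \<and> traveling_wave \<gamma> \<mu> g2 v2 \<longrightarrow>
           (\<exists>c. \<forall>x. g2 x = g1 (x - c)))"
  proof (intro allI impI)
    fix g1 v1 g2 v2
    assume h: "admissible_wave g1 \<and> traveling_wave \<gamma> \<mu> g1 v1 \<and> admissible_wave g2 \<and> traveling_wave \<gamma> \<mu> g2 v2"
    obtain r1 where r1: "\<forall>x. g1 x = epi Wst (x - r1)" using rep[of g1 v1] h by blast
    obtain r2 where r2: "\<forall>x. g2 x = epi Wst (x - r2)" using rep[of g2 v2] h by blast
    show "\<exists>c. \<forall>x. g2 x = g1 (x - c)"
    proof (intro exI allI)
      fix x
      have "g1 (x - (r2 - r1)) = epi Wst (x - (r2 - r1) - r1)" using r1 by blast
      also have "x - (r2 - r1) - r1 = x - r2" by simp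
      finally show "g2 x = g1 (x - (r2 - r1))" using r2 by simp
    qed
  qed
  have P3: "(\<forall>g v. admissible_wave g \<and> traveling_wave \<gamma> \<mu> g v
            \<and> Sup (ereal ` {x. g x > 0}) = 0 \<longrightarrow>
          (\<exists>L < 0. support g = {L..0}
            \<and> (\<forall>x. x \<notin> {L..0} \<longrightarrow> g x = -\<infinity>)
            \<and> (\<exists>F g'. finite F
                 \<and> (\<forall>x \<in> {L..0} - F.
                      ((\<lambda>y. real_of_ereal (g y)) has_real_derivative g' x) (at x within {L..0}))
                 \<and> (\<forall>x \<in> {L..0}. (g' has_integral (- real_of_ereal (g x))) {x..0}))
            \<and> (\<exists>s::real. Sup (ereal ` {\<xi>. (SUP x. Phi \<gamma> \<mu> (ereal \<xi>) g x) \<ge> ereal \<gamma>}) = ereal s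
                \<and> (\<gamma> \<le> gamma_c \<mu> \<longrightarrow>
                     \<mu> < 1
                     \<and> v = 2 * \<gamma> / (kk \<mu> * (2 - (kk \<mu> + 1) * \<mu>))
                     \<and> v \<le> s
                     \<and> (\<forall>j::nat. \<forall>x \<in> {L..0}. 1 \<le> j \<and> - (real j * v) < x \<and> x < - ((real j - 1) * v) \<longrightarrow>
                          ((\<lambda>y. real_of_ereal (g y)) has_real_derivative (real j * \<mu> - 1))
                            (at x within {L..0})))
                \<and> (\<gamma> > gamma_c \<mu> \<longrightarrow>
                     v = 1 - \<gamma>
                     \<and> v - s = 1 - (1 - \<gamma>) * (kk \<mu> * (1 - (kk \<mu> + 1) / 2 * \<mu>) + 1)
                     \<and> v - s > 0
                     \<and> (\<exists>F. finite F \<and> (\<forall>x \<in> {L..0} - F.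
                          (x > s - v \<longrightarrow>
                             ((\<lambda>y. real_of_ereal (g y)) has_real_derivative (-1)) (at x within {L..0}))
                          \<and> (\<forall>j::nat. 1 \<le> j \<and> real j \<le> KK \<mu> + 1 \<and>
                                s - (real j + 1) * v < x \<and> x < s - real j * v \<longrightarrow>
                             ((\<lambda>y. real_of_ereal (g y)) has_real_derivative (real j * \<mu> - 1))
                               (at x within {L..0}))
                          \<and> (x < s - (KK \<mu> + 2) * v \<longrightarrow>
                             ((\<lambda>y. real_of_ereal (g y)) has_real_derivative (1 + \<mu>))
                               (at x within {L..0}))))))))"
  proof (intro allI impI)
    fix g v
    assume h: "admissible_wave g \<and> traveling_wave \<gamma> \<mu> g v \<and> Sup (ereal ` {x. g x > 0}) = 0"
    obtain r where r: "\<forall>x. g x = epi Wst (x - r)" "Sup (ereal ` {x. g x > 0}) = ereal r" "v = vS"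
      using rep[of g v] h by blast
    have "r = 0" using r(2) h by (simp add: zero_ereal_def)
    then have hg: "g = epi Wst" using r(1) by (intro ext) simp
    show "(\<exists>L < 0. support g = {L..0}
            \<and> (\<forall>x. x \<notin> {L..0} \<longrightarrow> g x = -\<infinity>)
            \<and> (\<exists>F g'. finite F
                 \<and> (\<forall>x \<in> {L..0} - F.
                      ((\<lambda>y. real_of_ereal (g y)) has_real_derivative g' x) (at x within {L..0}))
                 \<and> (\<forall>x \<in> {L..0}. (g' has_integral (- real_of_ereal (g x))) {x..0}))
            \<and> (\<exists>s::real. Sup (ereal ` {\<xi>. (SUP x. Phi \<gamma> \<mu> (ereal \<xi>) g x) \<ge> ereal \<gamma>}) = ereal s
                \<and> (\<gamma> \<le> gamma_c \<mu> \<longrightarrow>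
                     \<mu> < 1
                     \<and> v = 2 * \<gamma> / (kk \<mu> * (2 - (kk \<mu> + 1) * \<mu>))
                     \<and> v \<le> s
                     \<and> (\<forall>j::nat. \<forall>x \<in> {L..0}. 1 \<le> j \<and> - (real j * v) < x \<and> x < - ((real j - 1) * v) \<longrightarrow>
                          ((\<lambda>y. real_of_ereal (g y)) has_real_derivative (real j * \<mu> - 1))
                            (at x within {L..0})))
                \<and> (\<gamma> > gamma_c \<mu> \<longrightarrow>
                     v = 1 - \<gamma>
                     \<and> v - s = 1 - (1 - \<gamma>) * (kk \<mu> * (1 - (kk \<mu> + 1) / 2 * \<mu>) + 1)
                     \<and> v - s > 0
                     \<and> (\<exists>F. finite F \<and> (\<forall>x \<in> {L..0} - F.
                          (x > s - v \<longrightarrow>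
                             ((\<lambda>y. real_of_ereal (g y)) has_real_derivative (-1)) (at x within {L..0}))
                          \<and> (\<forall>j::nat. 1 \<le> j \<and> real j \<le> KK \<mu> + 1 \<and>
                                s - (real j + 1) * v < x \<and> x < s - real j * v \<longrightarrow>
                             ((\<lambda>y. real_of_ereal (g y)) has_real_derivative (real j * \<mu> - 1))
                               (at x within {L..0}))
                          \<and> (x < s - (KK \<mu> + 2) * v \<longrightarrow>
                             ((\<lambda>y. real_of_ereal (g y)) has_real_derivative (1 + \<mu>))
                               (at x within {L..0})))))))" by (rule props_star[OF hg r(3)])
  qed
  have P4: "(\<mu> < 1 \<longrightarrow> 0 < gamma_c \<mu> \<and> gamma_c \<mu> < 1
          \<and> (\<forall>a b. 0 < a \<and> a < b \<and> b \<le> gamma_c \<mu> \<longrightarrow> speed_formula \<mu> a < speed_formula \<mu> b)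
          \<and> (\<forall>a b. gamma_c \<mu> \<le> a \<and> a < b \<and> b < 1 \<longrightarrow> speed_formula \<mu> b < speed_formula \<mu> a)
          \<and> (\<forall>a. 0 < a \<and> a < 1 \<longrightarrow> speed_formula \<mu> a \<le> speed_formula \<mu> (gamma_c \<mu>)))" by (rule speed_part)
  show ?thesis by (intro conjI P1 P2 P3 P4)
qed

end
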